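(* Let $A=S_{\mathbf q}(V)$, let $K_\bullet$ be its Koszul resolution and $B_\bullet(A)$ its normalized bar resolution. Define $A$-bimodule maps $\Phi_p\colon K_p\to B_p(A)$ by $$\Phi_p(1\otimes(x_{j_1}\wedge\cdots\wedge x_{j_p})\otimes1)=\sum_{\pi\in\mathrm{Sym}_p}\mathrm{sgn}(\pi)\,q_\pi^{j_1,\dots,j_p}\otimes x_{j_{\pi(1)}}\otimes\cdots\otimes x_{j_{\pi(p)}}\otimes1\quad(1\le j_1<\cdots<j_p\le N),$$ and $A$-bimodule maps $\Psi_p\colon B_p(A)\to K_p$ by $\Psi_0=\mathrm{Id}$ and, for $p\ge1$ and $\underline{\ell}^1,\dots,\underline{\ell}^p\in\mathbb{N}^N$, $$\Psi_p(1\otimes\underline{x}^{\underline{\ell}^1}\otimes\cdots\otimes\underline{x}^{\underline{\ell}^p}\otimes1)=\sum_{1\le j_1<\cdots<j_p\le N}\ \sum_{\substack{0\le r_s\le\ell^s_{j_s}-1\\ s=1,\dots,p}}\mu\ \underline{x}^{\underline{Q}}\otimes(x_{j_1}\wedge\cdots\wedge x_{j_p})\otimes\underline{x}^{\widehat{\underline{Q}}},$$ where $\underline{Q}=\underline{Q}^{(\underline{\ell}^1,\dots,\underline{\ell}^p;j_1,\dots,j_p)}_{(r_1,\dots,r_p)}\in\mathbb{N}^N$ is given (with $j_0=0$, $j_{p+1}=N+1$) by $\underline{Q}_j=r_s+\ell^1_j+\cdots+\ell^{s-1}_j$ if $j=j_s$ ($1\le s\le p$) and $\underline{Q}_j=\ell^1_j+\cdots+\ell^s_j$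 if $j_s<j<j_{s+1}$ ($0\le s\le p$); $\widehat{\underline{Q}}=\underline{\ell}^1+\cdots+\underline{\ell}^p-\underline{Q}-\sum_{s=1}^pe_{j_s}\in\mathbb{N}^N$; and $\mu\in\mathbb{k}^\times$ is the unique scalar with $\mu\,\underline{x}^{\underline{Q}}x_{j_1}\cdots x_{j_p}\underline{x}^{\widehat{\underline{Q}}}=\underline{x}^{\underline{\ell}^1}\cdots\underline{x}^{\underline{\ell}^p}$ in $S_{\mathbf q}(V)$. Then (i) $\Phi_\bullet$ is a chain map from $K_\bullet$ to $B_\bullet(A)$ lifting the identity of $A$; (ii) $\Psi_\bullet$ is a chain map from $B_\bullet(A)$ to $K_\bullet$ lifting the identity of $A$; (iii) $\Psi_\bullet\circ\Phi_\bullet$ is the identity map of $K_\bullet$.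
   Context: $\mathbb{k}$ is a field, $\mathbf q=(q_{i,j})$ nonzero scalars with $q_{i,i}=1$, $q_{j,i}=q_{i,j}^{-1}$, and $S_{\mathbf q}(V)=\mathbb{k}\langle x_1,\dots,x_N\mid x_ix_j=q_{i,j}x_jx_i\rangle$, with $\mathbb{k}$-basis the ordered monomials $\underline{x}^{\underline{\ell}}=x_1^{\ell_1}\cdots x_N^{\ell_N}$. $e_u\in\mathbb{N}^N$ is the $u$-th standard basis vector. The Koszul resolution $K_\bullet$: $K_p=A\otimes\bigwedge^p(V)\otimes A$ with $A$-bimodule basis $1\otimes(x_{j_1}\wedge\cdots\wedge x_{j_p})\otimes1$ ($j_1<\cdots<j_p$), $d_0$ multiplication, and $d_p(1\otimes(x_{j_1}\wedge\cdots\wedge x_{j_p})\otimes1)=\sum_{i=1}^p(-1)^{i+1}(\prod_{s=1}^iq_{j_s,j_i})x_{j_i}\otimes(x_{j_1}\wedge\cdots\widehat{x_{j_i}}\cdots\wedge x_{j_p})\otimes1-\sum_{i=1}^p(-1)^{i+1}(\prod_{s=i}^pq_{j_i,j_s})1\otimes(x_{j_1}\wedge\cdots\widehat{x_{j_i}}\cdots\wedge x_{j_p})\otimes x_{j_i}$. The normalized bar resolution: $\overline{A}=A/\mathbb{k}1$, $B_p(A)=A\otimes\overline{A}^{\otimes p}\otimes A$, with $\delta_p(a_0\otimes a_1\otimes\cdots\otimes a_p\otimes a_{p+1})=\sum_{i=0}^p(-1)^ia_0\otimes\cdots\otimes a_ia_{i+1}\otimes\cdots\otimes a_{p+1}$ (elements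 of $\overline A$ written by representatives). For $\pi\in\mathrm{Sym}_p$, the scalar $q_\pi^{j_1,\dots,j_p}$ is defined by $q_\pi^{j_1,\dots,j_p}x_{j_{\pi(1)}}\cdots x_{j_{\pi(p)}}=x_{j_1}\cdots x_{j_p}$ in $S_{\mathbf q}(V)$. (If some $\underline{\ell}^s=0$ the inner sum defining $\Psi_p$ is empty, so $\Psi_p$ is well defined on $\overline A$.) *)

theory Defs
  imports "HOL-Combinatorics.Permutations"
begin

definition supp :: "('b \<Rightarrow> 'k::zero) \<Rightarrow> 'b set" where
  "supp v = {x. v x \<noteq> 0}"

definition vsingle :: "'b \<Rightarrow> 'k::zero \<Rightarrow> 'b \<Rightarrow> 'k" where
  "vsingle x c = (\<lambda>y. if y = x then c else 0)"

definition vsmult :: "'k::times \<Rightarrow> ('b \<Rightarrow> 'k) \<Rightarrow> 'b \<Rightarrow> 'k" where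
  "vsmult c v = (\<lambda>y. c * v y)"

definition lin_ext :: "('b \<Rightarrow> 'c \<Rightarrow> 'k::comm_ring_1) \<Rightarrow> ('b \<Rightarrow> 'k) \<Rightarrow> 'c \<Rightarrow> 'k" where
  "lin_ext f v = (\<lambda>y. \<Sum>x\<in>supp v. v x * f x y)"

definition vecs :: "'b set \<Rightarrow> ('b \<Rightarrow> 'k::zero) \<Rightarrow> bool" where
  "vecs S v \<longleftrightarrow> finite (supp v) \<and> supp v \<subseteq> S"

section \<open>The quantum affine space S_q(V) with basis the ordered monomials\<close>

definition expvecs :: "nat \<Rightarrow> (nat \<Rightarrow> nat) set" where
  "expvecs N = {l. \<forall>j. j \<notin> {1..N} \<longrightarrow> l j = 0}"

definition mzero :: "nat \<Rightarrow> nat" where "mzero = (\<lambda>_. 0)"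

definition madd :: "(nat \<Rightarrow> nat) \<Rightarrow> (nat \<Rightarrow> nat) \<Rightarrow> nat \<Rightarrow> nat" where
  "madd a b = (\<lambda>j. a j + b j)"

definition unitv :: "nat \<Rightarrow> nat \<Rightarrow> nat" where
  "unitv u = (\<lambda>j. if j = u then 1 else 0)"

text \<open>x^a x^b = mcoef a b * x^(a+b), from x_i x_j = q_{i,j} x_j x_i.\<close>
definition mcoef :: "(nat \<Rightarrow> nat \<Rightarrow> 'k::comm_ring_1) \<Rightarrow> nat \<Rightarrow> (nat \<Rightarrow> nat) \<Rightarrow> (nat \<Rightarrow> nat) \<Rightarrow> 'k" where
  "mcoef q N a b = (\<Prod>i\<in>{1..N}. \<Prod>j\<in>{1..<i}. q i j ^ (a i * b j))"

definition amul :: "(nat \<Rightarrow> nat \<Rightarrow> 'k::comm_ring_1) \<Rightarrow> nat \<Rightarrow>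
    ((nat \<Rightarrow> nat) \<Rightarrow> 'k) \<Rightarrow> ((nat \<Rightarrow> nat) \<Rightarrow> 'k) \<Rightarrow> (nat \<Rightarrow> nat) \<Rightarrow> 'k" where
  "amul q N u v = lin_ext (\<lambda>a. lin_ext (\<lambda>b. vsingle (madd a b) (mcoef q N a b)) v) u"

text \<open>The ordered monomial x^l = x_1^{l_1}...x_N^{l_N}.\<close>
definition mon :: "(nat \<Rightarrow> nat) \<Rightarrow> (nat \<Rightarrow> nat) \<Rightarrow> 'k::zero_neq_one" where
  "mon l = vsingle l 1"

definition Aone :: "(nat \<Rightarrow> nat) \<Rightarrow> 'k::zero_neq_one" where
  "Aone = mon mzero"

definition xgen :: "nat \<Rightarrow> (nat \<Rightarrow> nat) \<Rightarrow> 'k::zero_neq_one" where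
  "xgen j = mon (unitv j)"

definition word :: "(nat \<Rightarrow> nat \<Rightarrow> 'k::comm_ring_1) \<Rightarrow> nat \<Rightarrow> nat list \<Rightarrow> (nat \<Rightarrow> nat) \<Rightarrow> 'k" where
  "word q N w = foldr (\<lambda>j acc. amul q N (xgen j) acc) w Aone"

definition monprod :: "(nat \<Rightarrow> nat \<Rightarrow> 'k::comm_ring_1) \<Rightarrow> nat \<Rightarrow> (nat \<Rightarrow> nat) list \<Rightarrow> (nat \<Rightarrow> nat) \<Rightarrow> 'k" where
  "monprod q N ls = foldr (\<lambda>l acc. amul q N (mon l) acc) ls Aone"

section \<open>A-bimodules A \<otimes> W \<otimes> A (basis triples (a, w, b) = x^a \<otimes> w \<otimes> x^b)\<close>

definition lact :: "(nat \<Rightarrow> nat \<Rightarrow> 'k::comm_ring_1) \<Rightarrow> nat \<Rightarrow> (nat \<Rightarrow> nat) \<Rightarrow>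
    ((nat \<Rightarrow> nat) \<times> 'w \<times> (nat \<Rightarrow> nat) \<Rightarrow> 'k) \<Rightarrow> (nat \<Rightarrow> nat) \<times> 'w \<times> (nat \<Rightarrow> nat) \<Rightarrow> 'k" where
  "lact q N a u = lin_ext (\<lambda>(c, w, d). vsingle (madd a c, w, d) (mcoef q N a c)) u"

definition ract :: "(nat \<Rightarrow> nat \<Rightarrow> 'k::comm_ring_1) \<Rightarrow> nat \<Rightarrow>
    ((nat \<Rightarrow> nat) \<times> 'w \<times> (nat \<Rightarrow> nat) \<Rightarrow> 'k) \<Rightarrow> (nat \<Rightarrow> nat) \<Rightarrow> (nat \<Rightarrow> nat) \<times> 'w \<times> (nat \<Rightarrow> nat) \<Rightarrow> 'k" where
  "ract q N u b = lin_ext (\<lambda>(c, w, d). vsingle (c, w, madd d b) (mcoef q N d b)) u"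

text \<open>The A-bimodule map A \<otimes> W \<otimes> A \<rightarrow> A \<otimes> W' \<otimes> A determined by the images g w of the generators 1 \<otimes> w \<otimes> 1.\<close>
definition bimod_ext :: "(nat \<Rightarrow> nat \<Rightarrow> 'k::comm_ring_1) \<Rightarrow> nat \<Rightarrow>
    ('w \<Rightarrow> (nat \<Rightarrow> nat) \<times> 'w2 \<times> (nat \<Rightarrow> nat) \<Rightarrow> 'k) \<Rightarrow>
    ((nat \<Rightarrow> nat) \<times> 'w \<times> (nat \<Rightarrow> nat) \<Rightarrow> 'k) \<Rightarrow> (nat \<Rightarrow> nat) \<times> 'w2 \<times> (nat \<Rightarrow> nat) \<Rightarrow> 'k" where
  "bimod_ext q N g v = lin_ext (\<lambda>(a, w, b). lact q N a (ract q N (g w) b)) v"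

text \<open>Basis of K_p: x^a \<otimes> (x_{j_1} \<and> ... \<and> x_{j_p}) \<otimes> x^b, with js = [j_1,...,j_p] strictly increasing.\<close>
definition Kbasis :: "nat \<Rightarrow> nat \<Rightarrow> ((nat \<Rightarrow> nat) \<times> nat list \<times> (nat \<Rightarrow> nat)) set" where
  "Kbasis N p = {(a, js, b). a \<in> expvecs N \<and> b \<in> expvecs N \<and> length js = p \<and>
                   sorted_wrt (<) js \<and> set js \<subseteq> {1..N}}"

definition del_at :: "nat \<Rightarrow> 'a list \<Rightarrow> 'a list" where
  "del_at i xs = take i xs @ drop (Suc i) xs"

text \<open>d_p on generators (0-based index i corresponds to the paper's i+1).\<close>
definition dK_gen :: "(nat \<Rightarrow> nat \<Rightarrow> 'k::comm_ring_1) \<Rightarrow> nat list \<Rightarrow>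
    (nat \<Rightarrow> nat) \<times> nat list \<times> (nat \<Rightarrow> nat) \<Rightarrow> 'k" where
  "dK_gen q js = (\<lambda>y.
     (\<Sum>i<length js. (-1) ^ i * (\<Prod>s\<in>{0..i}. q (js ! s) (js ! i)) *
          vsingle (unitv (js ! i), del_at i js, mzero) 1 y)
   - (\<Sum>i<length js. (-1) ^ i * (\<Prod>s\<in>{i..<length js}. q (js ! i) (js ! s)) *
          vsingle (mzero, del_at i js, unitv (js ! i)) 1 y))"

definition dK :: "(nat \<Rightarrow> nat \<Rightarrow> 'k::comm_ring_1) \<Rightarrow> nat \<Rightarrow>
    ((nat \<Rightarrow> nat) \<times> nat list \<times> (nat \<Rightarrow> nat) \<Rightarrow> 'k) \<Rightarrow> (nat \<Rightarrow> nat) \<times> nat list \<times> (nat \<Rightarrow> nat) \<Rightarrow> 'k" where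
  "dK q N v = bimod_ext q N (dK_gen q) v"

text \<open>d_0 : K_0 = A \<otimes> A \<rightarrow> A, multiplication.\<close>
definition epsK :: "(nat \<Rightarrow> nat \<Rightarrow> 'k::comm_ring_1) \<Rightarrow> nat \<Rightarrow>
    ((nat \<Rightarrow> nat) \<times> nat list \<times> (nat \<Rightarrow> nat) \<Rightarrow> 'k) \<Rightarrow> (nat \<Rightarrow> nat) \<Rightarrow> 'k" where
  "epsK q N v = lin_ext (\<lambda>(a, js, b). amul q N (mon a) (mon b)) v"

text \<open>Basis of B_p(A): x^{a_0} \<otimes> x^{l_1} \<otimes> ... \<otimes> x^{l_p} \<otimes> x^{a_{p+1}}, the l_s nonconstant
  (basis of \<open>A/k1\<close>).\<close>
definition Bbasis :: "nat \<Rightarrow> nat \<Rightarrow> ((nat \<Rightarrow> nat) \<times> (nat \<Rightarrow> nat) list \<times> (nat \<Rightarrow> nat)) set" where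
  "Bbasis N p = {(a, ls, b). a \<in> expvecs N \<and> b \<in> expvecs N \<and> length ls = p \<and>
                   (\<forall>l\<in>set ls. l \<in> expvecs N \<and> l \<noteq> mzero)}"

definition bar_of_list :: "'a list \<Rightarrow> 'a \<times> 'a list \<times> 'a" where
  "bar_of_list L = (hd L, butlast (tl L), last L)"

definition deltaB :: "(nat \<Rightarrow> nat \<Rightarrow> 'k::comm_ring_1) \<Rightarrow> nat \<Rightarrow>
    ((nat \<Rightarrow> nat) \<times> (nat \<Rightarrow> nat) list \<times> (nat \<Rightarrow> nat) \<Rightarrow> 'k) \<Rightarrow>
    (nat \<Rightarrow> nat) \<times> (nat \<Rightarrow> nat) list \<times> (nat \<Rightarrow> nat) \<Rightarrow> 'k" where
  "deltaB q N v = lin_ext (\<lambda>(a, ls, b). let L = a # ls @ [b] in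
     (\<lambda>y. \<Sum>i\<le>length ls. (-1) ^ i * mcoef q N (L ! i) (L ! Suc i) *
        vsingle (bar_of_list (take i L @ [madd (L ! i) (L ! Suc i)] @ drop (Suc (Suc i)) L)) 1 y)) v"

text \<open>\<delta>_0 : B_0(A) = A \<otimes> A \<rightarrow> A, multiplication.\<close>
definition epsB :: "(nat \<Rightarrow> nat \<Rightarrow> 'k::comm_ring_1) \<Rightarrow> nat \<Rightarrow>
    ((nat \<Rightarrow> nat) \<times> (nat \<Rightarrow> nat) list \<times> (nat \<Rightarrow> nat) \<Rightarrow> 'k) \<Rightarrow> (nat \<Rightarrow> nat) \<Rightarrow> 'k" where
  "epsB q N v = lin_ext (\<lambda>(a, ls, b). amul q N (mon a) (mon b)) v"

text \<open>q_\<pi>^{j_1..j_p}: q_\<pi> x_{j_\<pi>(1)} ... x_{j_\<pi>(p)} = x_{j_1} ... x_{j_p} (0-based indices).\<close>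
definition qperm :: "(nat \<Rightarrow> nat \<Rightarrow> 'k::field) \<Rightarrow> nat \<Rightarrow> nat list \<Rightarrow> (nat \<Rightarrow> nat) \<Rightarrow> 'k" where
  "qperm q N js \<pi> = (THE c. vsmult c (word q N (map (\<lambda>k. js ! \<pi> k) [0..<length js])) = word q N js)"

definition Phi_gen :: "(nat \<Rightarrow> nat \<Rightarrow> 'k::field) \<Rightarrow> nat \<Rightarrow> nat list \<Rightarrow>
    (nat \<Rightarrow> nat) \<times> (nat \<Rightarrow> nat) list \<times> (nat \<Rightarrow> nat) \<Rightarrow> 'k" where
  "Phi_gen q N js = (\<lambda>y. \<Sum>\<pi>\<in>{\<pi>. \<pi> permutes {0..<length js}}.
      of_int (sign \<pi>) * qperm q N js \<pi> *
      vsingle (mzero, map (\<lambda>k. unitv (js ! \<pi> k)) [0..<length js], mzero) 1 y)"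

definition Phi :: "(nat \<Rightarrow> nat \<Rightarrow> 'k::field) \<Rightarrow> nat \<Rightarrow>
    ((nat \<Rightarrow> nat) \<times> nat list \<times> (nat \<Rightarrow> nat) \<Rightarrow> 'k) \<Rightarrow>
    (nat \<Rightarrow> nat) \<times> (nat \<Rightarrow> nat) list \<times> (nat \<Rightarrow> nat) \<Rightarrow> 'k" where
  "Phi q N v = bimod_ext q N (Phi_gen q N) v"

definition incseqs :: "nat \<Rightarrow> nat \<Rightarrow> nat list set" where
  "incseqs N p = {js. length js = p \<and> sorted_wrt (<) js \<and> set js \<subseteq> {1..N}}"

definition rsets :: "(nat \<Rightarrow> nat) list \<Rightarrow> nat list \<Rightarrow> nat list set" where
  "rsets ls js = {rs. length rs = length js \<and> (\<forall>s<length js. rs ! s < (ls ! s) (js ! s))}"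

text \<open>Q: with s = #{i. j_i < j} (0-based), Q_j = r_s + l^1_j+...+l^s_j if j = j_{s+1} (paper's
  1-based index), and Q_j = l^1_j+...+l^s_j if j_s < j < j_{s+1}.\<close>
definition Qvec :: "(nat \<Rightarrow> nat) list \<Rightarrow> nat list \<Rightarrow> nat list \<Rightarrow> nat \<Rightarrow> nat" where
  "Qvec ls js rs = (\<lambda>j. let s = card {i. i < length js \<and> js ! i < j} in
      (if j \<in> set js then rs ! s else 0) + (\<Sum>t<s. (ls ! t) j))"

definition Qhat :: "(nat \<Rightarrow> nat) list \<Rightarrow> nat list \<Rightarrow> nat list \<Rightarrow> nat \<Rightarrow> nat" where
  "Qhat ls js rs = (\<lambda>j. (\<Sum>t<length ls. (ls ! t) j) - Qvec ls js rs j - (if j \<in> set js then 1 else 0))"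

definition mu :: "(nat \<Rightarrow> nat \<Rightarrow> 'k::field) \<Rightarrow> nat \<Rightarrow> (nat \<Rightarrow> nat) list \<Rightarrow> nat list \<Rightarrow> nat list \<Rightarrow> 'k" where
  "mu q N ls js rs = (THE m. vsmult m (amul q N (mon (Qvec ls js rs))
        (amul q N (word q N js) (mon (Qhat ls js rs)))) = monprod q N ls)"

definition Psi_gen :: "(nat \<Rightarrow> nat \<Rightarrow> 'k::field) \<Rightarrow> nat \<Rightarrow> (nat \<Rightarrow> nat) list \<Rightarrow>
    (nat \<Rightarrow> nat) \<times> nat list \<times> (nat \<Rightarrow> nat) \<Rightarrow> 'k" where
  "Psi_gen q N ls = (if ls = [] then vsingle (mzero, [], mzero) 1 else
     (\<lambda>y. \<Sum>js\<in>incseqs N (length ls). \<Sum>rs\<in>rsets ls js.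
         mu q N ls js rs * vsingle (Qvec ls js rs, js, Qhat ls js rs) 1 y))"

definition Psi :: "(nat \<Rightarrow> nat \<Rightarrow> 'k::field) \<Rightarrow> nat \<Rightarrow>
    ((nat \<Rightarrow> nat) \<times> (nat \<Rightarrow> nat) list \<times> (nat \<Rightarrow> nat) \<Rightarrow> 'k) \<Rightarrow>
    (nat \<Rightarrow> nat) \<times> nat list \<times> (nat \<Rightarrow> nat) \<Rightarrow> 'k" where
  "Psi q N v = bimod_ext q N (Psi_gen q N) v"

end

theory Submission
  imports Defs "HOL-Library.Poly_Mapping"
begin

lemma lin_ext_superset:
  assumes "finite S" "supp v \<subseteq> S"
  shows "lin_ext f v y = (\<Sum>x\<in>S. v x * f x y)"
  unfolding lin_ext_def
  by (rule sum.mono_neutral_left) (use assms in \<open>auto simp: supp_def\<close>)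

lemma lin_ext_cong:
  assumes "\<And>x. x \<in> supp v \<Longrightarrow> f x = g x"
  shows "lin_ext f v = lin_ext g v"
  unfolding lin_ext_def using assms by auto

lemma supp_lin_ext: "supp (lin_ext g v) \<subseteq> (\<Union>x\<in>supp v. supp (g x))"
  unfolding lin_ext_def supp_def
  by (auto intro: ccontr elim!: sum.not_neutral_contains_not_neutral)

lemma lin_ext_comp:
  assumes fin: "finite (supp v)" and fg: "\<And>x. x \<in> supp v \<Longrightarrow> finite (supp (g x))"
  shows "lin_ext f (lin_ext g v) = lin_ext (\<lambda>x. lin_ext f (g x)) v"
proof
  fix y
  define S where "S = (\<Union>x\<in>supp v. supp (g x))"
  have finS: "finite S" using fin fg by (auto simp: S_def)
  have "lin_ext f (lin_ext g v) y = (\<Sum>z\<in>S. lin_ext g v z * f z y)"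
    by (rule lin_ext_superset[OF finS]) (unfold S_def, rule supp_lin_ext)
  also have "\<dots> = (\<Sum>z\<in>S. (\<Sum>x\<in>supp v. v x * g x z) * f z y)"
    by (simp add: lin_ext_def)
  also have "\<dots> = (\<Sum>x\<in>supp v. v x * (\<Sum>z\<in>S. g x z * f z y))"
    by (simp add: sum_distrib_left sum_distrib_right mult.assoc sum.swap[of _ S])
  also have "\<dots> = (\<Sum>x\<in>supp v. v x * lin_ext f (g x) y)"
    by (rule sum.cong[OF refl], subst lin_ext_superset[OF finS]) (auto simp: S_def)
  finally show "lin_ext f (lin_ext g v) y = lin_ext (\<lambda>x. lin_ext f (g x)) v y"
    by (simp add: lin_ext_def)
qed

lemma lin_ext_single_id:
  assumes "finite (supp v)"
  shows "lin_ext (\<lambda>x. vsingle x 1) v = v"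
proof
  fix y
  show "lin_ext (\<lambda>x. vsingle x 1) v y = v y"
  proof (cases "y \<in> supp v")
    case True
    have "(\<Sum>x\<in>supp v. v x * (if y = x then 1 else 0)) = (\<Sum>x\<in>supp v. if y = x then v x else 0)"
      by (rule sum.cong) auto
    then show ?thesis unfolding lin_ext_def vsingle_def
      using assms True by (simp add: sum.delta)
  next
    case False
    have "(\<Sum>x\<in>supp v. v x * (if y = x then 1 else 0)) = (\<Sum>x\<in>supp v. if y = x then v x else 0)"
      by (rule sum.cong) auto
    then show ?thesis unfolding lin_ext_def vsingle_def
      using assms False by (simp add: sum.delta supp_def)
  qed
qed

definition sv :: "'i set \<Rightarrow> ('i \<Rightarrow> 'k::comm_ring_1) \<Rightarrow> ('i \<Rightarrow> 'b) \<Rightarrow> 'b \<Rightarrow> 'k" where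
  "sv I c Y = (\<lambda>z. \<Sum>i\<in>I. c i * vsingle (Y i) 1 z)"

lemma supp_sv: "supp (sv I c Y) \<subseteq> Y ` I"
  unfolding sv_def supp_def vsingle_def
  by (auto elim!: sum.not_neutral_contains_not_neutral split: if_splits)

lemma finite_supp_sv: "finite I \<Longrightarrow> finite (supp (sv I c Y))"
  by (rule finite_subset[OF supp_sv]) auto

lemma lin_ext_sv:
  assumes "finite I"
  shows "lin_ext f (sv I c Y) = (\<lambda>z. \<Sum>i\<in>I. c i * f (Y i) z)"
proof
  fix z
  have "lin_ext f (sv I c Y) z = (\<Sum>x\<in>Y ` I. sv I c Y x * f x z)"
    using assms supp_sv[of I c Y] by (intro lin_ext_superset) auto
  also have "\<dots> = (\<Sum>x\<in>Y ` I. \<Sum>i\<in>I. c i * (if x = Y i then 1 else 0) * f x z)"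
    by (simp add: sv_def vsingle_def sum_distrib_right eq_commute)
  also have "\<dots> = (\<Sum>i\<in>I. \<Sum>x\<in>Y ` I. c i * (if x = Y i then 1 else 0) * f x z)"
    by (rule sum.swap)
  also have "\<dots> = (\<Sum>i\<in>I. \<Sum>x\<in>Y ` I. if x = Y i then c i * f x z else 0)"
    by (rule sum.cong[OF refl], rule sum.cong[OF refl]) auto
  also have "\<dots> = (\<Sum>i\<in>I. c i * f (Y i) z)"
    using assms by (simp add: sum.delta')
  finally show "lin_ext f (sv I c Y) z = (\<Sum>i\<in>I. c i * f (Y i) z)" .
qed

lemma lin_ext_sv_single:
  assumes "finite I" "\<And>x. f x = vsingle (F x) (d x)"
  shows "lin_ext f (sv I c Y) = sv I (\<lambda>i. c i * d (Y i)) (\<lambda>i. F (Y i))"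
  using lin_ext_sv[OF assms(1), of f c Y] by (auto simp: sv_def assms(2) vsingle_def intro!: sum.cong)

lemma vsingle_sv: "vsingle x c = sv {()} (\<lambda>_. c) (\<lambda>_. x)"
  by (auto simp: sv_def vsingle_def)

section \<open>Twisting\<close>

definition tw :: "('x \<Rightarrow> 'k::field) \<Rightarrow> ('y \<Rightarrow> 'k) \<Rightarrow> 'x \<Rightarrow> ('y \<Rightarrow>\<^sub>0 int) \<Rightarrow> 'y \<Rightarrow> 'k" where
  "tw t1 t2 X w = (\<lambda>Y. of_int (Poly_Mapping.lookup w Y) * (t1 X / t2 Y))"

lemma supp_tw: "supp (tw t1 t2 X w) \<subseteq> Poly_Mapping.keys w"
  by (auto simp: tw_def supp_def in_keys_iff)

lemma finite_supp_tw: "finite (supp (tw t1 t2 X w))"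
  by (meson finite_keys finite_subset supp_tw)

lemma lookup_frag_extend:
  "Poly_Mapping.lookup (frag_extend h w) z =
     (\<Sum>y\<in>Poly_Mapping.keys w. Poly_Mapping.lookup w y * Poly_Mapping.lookup (h y) z)"
  by (simp add: frag_extend_def lookup_sum)

lemma tw_comp:
  assumes "\<And>Y. Y \<in> Poly_Mapping.keys w \<Longrightarrow> g Y = tw t2 t3 Y (h Y)"
    and "\<And>Y. Y \<in> Poly_Mapping.keys w \<Longrightarrow> t2 Y \<noteq> 0"
  shows "lin_ext g (tw t1 t2 X w) = tw t1 t3 X (frag_extend h w)"
proof
  fix z
  have "lin_ext g (tw t1 t2 X w) z = (\<Sum>y\<in>Poly_Mapping.keys w. tw t1 t2 X w y * g y z)"
    by (rule lin_ext_superset) (auto simp: supp_tw)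
  also have "\<dots> = (\<Sum>y\<in>Poly_Mapping.keys w. of_int (Poly_Mapping.lookup w y * Poly_Mapping.lookup (h y) z) * (t1 X / t3 z))"
    by (rule sum.cong[OF refl]) (use assms in \<open>simp add: tw_def\<close>)
  also have "\<dots> = tw t1 t3 X (frag_extend h w) z"
    by (simp add: tw_def lookup_frag_extend sum_distrib_right divide_inverse mult.assoc)
  finally show "lin_ext g (tw t1 t2 X w) z = tw t1 t3 X (frag_extend h w) z" .
qed

lemma sv_tw:
  assumes "finite I" "\<And>i. i \<in> I \<Longrightarrow> c i * t2 (Y i) = of_int (e i) * t1 X"
    and "\<And>i. i \<in> I \<Longrightarrow> t2 (Y i) \<noteq> 0"
  shows "sv I c Y = tw t1 t2 X (\<Sum>i\<in>I. frag_cmul (e i) (frag_of (Y i)))"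
proof
  fix z
  have "sv I c Y z = (\<Sum>i\<in>I. (if z = Y i then of_int (e i) * (t1 X / t2 z) else 0))"
    unfolding sv_def vsingle_def
    by (rule sum.cong[OF refl]) (use assms in \<open>auto simp: field_simps\<close>)
  also have "\<dots> = (\<Sum>i\<in>I. of_int (if z = Y i then e i else 0) * (t1 X / t2 z))"
    by (rule sum.cong) auto
  also have "\<dots> = tw t1 t2 X (\<Sum>i\<in>I. frag_cmul (e i) (frag_of (Y i))) z"
    by (simp add: tw_def lookup_sum sum_distrib_right of_int_sum divide_inverse mult.assoc if_distrib cong: if_cong)
  finally show "sv I c Y z = tw t1 t2 X (\<Sum>i\<in>I. frag_cmul (e i) (frag_of (Y i))) z" .
qed

lemma tw_of: "t X \<noteq> 0 \<Longrightarrow> tw t t X (frag_of X) = vsingle X 1"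
  by (auto simp: tw_def vsingle_def)


lemma madd_commute: "madd a b = madd b a"
  by (auto simp: madd_def)
lemma madd_assoc: "madd (madd a b) c = madd a (madd b c)"
  by (auto simp: madd_def)
lemma madd_left_commute: "madd a (madd b c) = madd b (madd a c)"
  by (auto simp: madd_def)
lemma madd_mzero [simp]: "madd mzero a = a" "madd a mzero = a"
  by (auto simp: madd_def mzero_def)
lemmas madd_ac = madd_assoc madd_commute madd_left_commute

definition msum :: "(nat \<Rightarrow> nat) list \<Rightarrow> nat \<Rightarrow> nat" where
  "msum xs = foldr madd xs mzero"

lemma msum_simps [simp]: "msum [] = mzero" "msum (x # xs) = madd x (msum xs)"
  by (simp_all add: msum_def)

lemma msum_append [simp]: "msum (xs @ ys) = madd (msum xs) (msum ys)"
  by (induction xs) (simp_all add: madd_assoc)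

lemma msum_apply: "msum xs j = (\<Sum>x\<leftarrow>xs. x j)"
  by (induction xs) (auto simp: madd_def mzero_def)

context
  fixes q :: "nat \<Rightarrow> nat \<Rightarrow> 'k::field" and N :: nat
begin

lemma mcoef_madd_left: "mcoef q N (madd a b) c = mcoef q N a c * mcoef q N b c"
  unfolding mcoef_def madd_def by (simp add: add_mult_distrib power_add prod.distrib)

lemma mcoef_madd_right: "mcoef q N c (madd a b) = mcoef q N c a * mcoef q N c b"
  unfolding mcoef_def madd_def by (simp add: add_mult_distrib2 power_add prod.distrib)

lemma mcoef_mzero [simp]: "mcoef q N mzero c = 1" "mcoef q N c mzero = 1"
  unfolding mcoef_def mzero_def by simp_all

lemma mcoef_nz:
  assumes "\<forall>i\<in>{1..N}. \<forall>j\<in>{1..N}. q i j \<noteq> 0"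
  shows "mcoef q N a b \<noteq> 0"
  unfolding mcoef_def using assms by (auto simp: prod_zero_iff)

lemma mcoef_unitv:
  assumes "u \<in> {1..N}" "v \<in> {1..N}"
  shows "mcoef q N (unitv u) (unitv v) = (if v < u then q u v else 1)"
proof -
  have "mcoef q N (unitv u) (unitv v) = (\<Prod>i\<in>{1..N}. \<Prod>j\<in>{1..<i}. if i = u \<and> j = v then q i j else 1)"
    unfolding mcoef_def unitv_def by (intro prod.cong refl) auto
  also have "\<dots> = (\<Prod>i\<in>{1..N}. if i = u then (\<Prod>j\<in>{1..<i}. if j = v then q i j else 1) else 1)"
    by (intro prod.cong refl) auto
  also have "\<dots> = (\<Prod>j\<in>{1..<u}. if j = v then q u j else 1)"
    using assms by (subst prod.delta) auto
  also have "\<dots> = (if v < u then q u v else 1)"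
    using assms by (subst prod.delta) auto
  finally show ?thesis .
qed

fun th :: "(nat \<Rightarrow> nat) list \<Rightarrow> 'k" where
  "th [] = 1"
| "th (x # xs) = mcoef q N x (msum xs) * th xs"

lemma th_append: "th (xs @ ys) = th xs * th ys * mcoef q N (msum xs) (msum ys)"
  by (induction xs) (simp_all add: mcoef_madd_right mcoef_madd_left)

lemma th_nz:
  assumes "\<forall>i\<in>{1..N}. \<forall>j\<in>{1..N}. q i j \<noteq> 0"
  shows "th xs \<noteq> 0"
  by (induction xs) (simp_all add: mcoef_nz[OF assms])

lemma th_triple: "th (a # W @ [b]) = mcoef q N a (msum W) * mcoef q N a b * th W * mcoef q N (msum W) b"
  by (simp add: th_append mcoef_madd_right)

end

lemma lin_ext_vsingle: "lin_ext f (vsingle x c) = (\<lambda>y. c * f x y)"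
proof
  fix y
  show "lin_ext f (vsingle x c) y = c * f x y"
  proof (cases "c = 0")
    case True
    then show ?thesis by (simp add: lin_ext_def supp_def vsingle_def)
  next
    case False
    then have "supp (vsingle x c) = {x}" by (auto simp: supp_def vsingle_def)
    then show ?thesis by (simp add: lin_ext_def vsingle_def)
  qed
qed

lemma mult_vsingle: "(c::'k::comm_ring_1) * vsingle x d y = vsingle x (c * d) y"
  by (simp add: vsingle_def)

lemma amul_vsingle:
  "amul q N (vsingle a c) (vsingle b d) = vsingle (madd a b) (c * d * mcoef q N a b)"
  unfolding amul_def lin_ext_vsingle by (rule ext) (simp add: vsingle_def)

lemma monprod_eq: "monprod q N ls = vsingle (msum ls) (th q N ls)"
  by (induction ls) (simp_all add: monprod_def Aone_def mon_def amul_vsingle mult_ac)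

lemma word_eq: "word q N js = vsingle (msum (map unitv js)) (th q N (map unitv js))"
  by (induction js) (simp_all add: word_def Aone_def mon_def xgen_def amul_vsingle mult_ac)

lemma vsmult_vsingle: "vsmult (c::'k::comm_ring_1) (vsingle x d) = vsingle x (c * d)"
  by (auto simp: vsmult_def vsingle_def)

lemma vsingle_eq_iff: "vsingle x c = vsingle x d \<longleftrightarrow> c = d"
  by (metis vsingle_def)

lemma the_ratio:
  fixes d e :: "'k::field"
  assumes "d \<noteq> 0"
  shows "(THE c. vsmult c (vsingle x d) = vsingle x e) = e / d"
  using assms by (simp add: vsmult_vsingle vsingle_eq_iff) (rule the_equality; simp add: field_simps)


type_synonym ex = "nat \<Rightarrow> nat"
type_synonym kb = "ex \<times> nat list \<times> ex"
type_synonym bb = "ex \<times> ex list \<times> ex"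

definition dK0 :: "kb \<Rightarrow> kb \<Rightarrow>\<^sub>0 int" where
  "dK0 x = (case x of (a,js,b) \<Rightarrow> \<Sum>i<length js. frag_cmul ((-1)^i)
      (frag_of (madd a (unitv (js!i)), del_at i js, b) - frag_of (a, del_at i js, madd (unitv (js!i)) b)))"

definition dB0 :: "bb \<Rightarrow> bb \<Rightarrow>\<^sub>0 int" where
  "dB0 x = (case x of (a, ls, b) \<Rightarrow> let L = a # ls @ [b] in
     \<Sum>i\<le>length ls. frag_cmul ((-1) ^ i)
        (frag_of (bar_of_list (take i L @ [madd (L ! i) (L ! Suc i)] @ drop (Suc (Suc i)) L))))"

definition pw :: "nat list \<Rightarrow> (nat \<Rightarrow> nat) \<Rightarrow> ex list" where
  "pw js \<pi> = map (\<lambda>k. unitv (js ! \<pi> k)) [0..<length js]"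

definition Phi0 :: "kb \<Rightarrow> bb \<Rightarrow>\<^sub>0 int" where
  "Phi0 x = (case x of (a,js,b) \<Rightarrow> \<Sum>\<pi>\<in>{\<pi>. \<pi> permutes {0..<length js}}.
      frag_cmul (sign \<pi>) (frag_of (a, pw js \<pi>, b)))"

lemma frag_cmul_diff2: "frag_cmul c (a - b) = frag_cmul c a - frag_cmul c b"
  by (rule poly_mapping_eqI) (simp add: lookup_minus algebra_simps)

locale qsys =
  fixes q :: "nat \<Rightarrow> nat \<Rightarrow> 'k::field" and N :: nat
  assumes qnz: "\<forall>i\<in>{1..N}. \<forall>j\<in>{1..N}. q i j \<noteq> 0"
    and qdiag: "\<forall>i\<in>{1..N}. q i i = 1"
    and qinv: "\<forall>i\<in>{1..N}. \<forall>j\<in>{1..N}. q j i = inverse (q i j)"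
begin

abbreviation sg where "sg \<equiv> mcoef q N"

definition thB :: "bb \<Rightarrow> 'k" where "thB = (\<lambda>(a,ls,b). th q N (a # ls @ [b]))"
definition thK :: "kb \<Rightarrow> 'k" where "thK = (\<lambda>(a,js,b). th q N (a # map unitv js @ [b]))"
definition thA :: "ex \<Rightarrow> 'k" where "thA = (\<lambda>_. 1)"

lemma sg_nz: "sg a b \<noteq> 0" using mcoef_nz[OF qnz] .
lemma th_nz': "th q N xs \<noteq> 0" using th_nz[OF qnz] .
lemma thB_nz: "thB x \<noteq> 0" by (auto simp: thB_def th_nz' sg_nz split: prod.splits)
lemma thK_nz: "thK x \<noteq> 0" by (auto simp: thK_def th_nz' sg_nz split: prod.splits)

lemma lact_sv:
  assumes "finite I"
  shows "lact q N a (sv I c Y) = sv I (\<lambda>i. c i * sg a (fst (Y i)))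
           (\<lambda>i. (madd a (fst (Y i)), fst (snd (Y i)), snd (snd (Y i))))"
  unfolding lact_def
  by (rule lin_ext_sv_single[OF assms, where F="\<lambda>x. (madd a (fst x), fst (snd x), snd (snd x))"
        and d = "\<lambda>x. sg a (fst x)"]) (auto split: prod.splits)

lemma ract_sv:
  assumes "finite I"
  shows "ract q N (sv I c Y) b = sv I (\<lambda>i. c i * sg (snd (snd (Y i))) b)
           (\<lambda>i. (fst (Y i), fst (snd (Y i)), madd (snd (snd (Y i))) b))"
  unfolding ract_def
  by (rule lin_ext_sv_single[OF assms, where F="\<lambda>x. (fst x, fst (snd x), madd (snd (snd x)) b)"
        and d = "\<lambda>x. sg (snd (snd x)) b"]) (auto split: prod.splits)

lemma sig_left_list:
  assumes "\<forall>x\<in>set xs. x \<in> {1..N} \<and> x < j" "j \<in> {1..N}"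
  shows "sg (msum (map unitv xs)) (unitv j) = 1 \<and> sg (unitv j) (msum (map unitv xs)) * (\<Prod>x\<leftarrow>xs. q x j) = 1"
  using assms
proof (induction xs)
  case (Cons x xs)
  have "q j x * q x j = 1" using Cons.prems qinv qnz by (auto simp: field_simps)
  then show ?case using Cons
    by (auto simp: mcoef_madd_left mcoef_madd_right mcoef_unitv mult_ac)
qed simp

lemma sig_right_list:
  assumes "\<forall>y\<in>set ys. y \<in> {1..N} \<and> j < y" "j \<in> {1..N}"
  shows "sg (unitv j) (msum (map unitv ys)) = 1 \<and> sg (msum (map unitv ys)) (unitv j) * (\<Prod>y\<leftarrow>ys. q j y) = 1"
  using assms
proof (induction ys)
  case (Cons y ys)
  have "q y j * q j y = 1" using Cons.prems qinv qnz by (auto simp: field_simps)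
  then show ?case using Cons
    by (auto simp: mcoef_madd_left mcoef_madd_right mcoef_unitv mult_ac)
qed simp

lemma prod_upto_take:
  assumes "i < length js"
  shows "(\<Prod>s\<in>{0..i}. f (js ! s)) = (\<Prod>x\<leftarrow>take i js. f x) * f (js ! i)"
proof -
  have "(\<Prod>x\<leftarrow>take i js. f x) = (\<Prod>s\<in>{0..<i}. f (js ! s))"
    using assms by (subst prod.list_conv_set_nth) (auto intro!: prod.cong)
  moreover have "{0..i} = insert i {0..<i}" by auto
  ultimately show ?thesis by (simp add: mult.commute)
qed

lemma prod_from_drop:
  assumes "i < length js"
  shows "(\<Prod>s\<in>{i..<length js}. f (js ! s)) = f (js ! i) * (\<Prod>y\<leftarrow>drop (Suc i) js. f y)"
proof -
  have "(\<Prod>y\<leftarrow>drop (Suc i) js. f y) = (\<Prod>t\<in>{0..<length js - Suc i}. f (js ! (Suc i + t)))"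
    using assms by (subst prod.list_conv_set_nth) (auto intro!: prod.cong)
  also have "\<dots> = (\<Prod>s\<in>{Suc i..<length js}. f (js ! s))"
  proof -
    have ee: "(length js - Suc i) + Suc i = length js" using assms by simp
    have "(\<Prod>s\<in>{Suc i..<length js}. f (js ! s)) = (\<Prod>s\<in>{0 + Suc i..<(length js - Suc i) + Suc i}. f (js ! s))"
      by (simp only: ee add_0)
    also have "\<dots> = (\<Prod>t\<in>{0..<length js - Suc i}. f (js ! (t + Suc i)))"
      by (rule prod.shift_bounds_nat_ivl)
    finally show ?thesis by (simp add: add.commute)
  qed
  finally have "(\<Prod>y\<leftarrow>drop (Suc i) js. f y) = (\<Prod>s\<in>{Suc i..<length js}. f (js ! s))" .
  moreover have "{i..<length js} = insert i {Suc i..<length js}" using assms by auto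
  ultimately show ?thesis by simp
qed

lemma sorted_split:
  assumes "sorted_wrt (<) js" "i < length js"
  shows "\<forall>x\<in>set (take i js). x < js ! i" "\<forall>y\<in>set (drop (Suc i) js). js ! i < y"
proof -
  have e: "js = take i js @ js ! i # drop (Suc i) js" using assms by (simp add: id_take_nth_drop)
  have "sorted_wrt (<) (take i js @ js ! i # drop (Suc i) js)" using assms(1) e by simp
  then show "\<forall>x\<in>set (take i js). x < js ! i" "\<forall>y\<in>set (drop (Suc i) js). js ! i < y"
    by (auto simp: sorted_wrt_append)
qed

lemma dK_scalar:
  assumes "sorted_wrt (<) js" "set js \<subseteq> {1..N}" "i < length js"
  shows "(\<Prod>s\<in>{0..i}. q (js ! s) (js ! i)) * sg a (unitv (js ! i)) *
           thK (madd a (unitv (js ! i)), del_at i js, b) = thK (a, js, b)"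
    and "(\<Prod>s\<in>{i..<length js}. q (js ! i) (js ! s)) * sg (unitv (js ! i)) b *
           thK (a, del_at i js, madd (unitv (js ! i)) b) = thK (a, js, b)"
proof -
  define xs where "xs = take i js"
  define ys where "ys = drop (Suc i) js"
  define j where "j = js ! i"
  have e: "js = xs @ j # ys" using assms by (simp add: id_take_nth_drop xs_def ys_def j_def)
  have d: "del_at i js = xs @ ys" by (simp add: del_at_def xs_def ys_def)
  have jr: "j \<in> {1..N}" using assms(2) nth_mem[OF assms(3)] by (auto simp: j_def)
  have xr: "\<forall>x\<in>set xs. x \<in> {1..N} \<and> x < j"
    using sorted_split[OF assms(1,3)] assms(2) by (auto simp: xs_def j_def dest: in_set_takeD)
  have yr: "\<forall>y\<in>set ys. y \<in> {1..N} \<and> j < y"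
    using sorted_split[OF assms(1,3)] assms(2) by (auto simp: ys_def j_def dest: in_set_dropD)
  note L = sig_left_list[OF xr jr] and R = sig_right_list[OF yr jr]
  have P1: "(\<Prod>s\<in>{0..i}. q (js ! s) j) = inverse (sg (unitv j) (msum (map unitv xs)))"
    using L prod_upto_take[OF assms(3), of "\<lambda>x. q x j"] qdiag jr sg_nz
    by (auto simp: j_def xs_def field_simps)
  have P2: "(\<Prod>s\<in>{i..<length js}. q j (js ! s)) = inverse (sg (msum (map unitv ys)) (unitv j))"
    using R prod_from_drop[OF assms(3), of "\<lambda>y. q j y"] qdiag jr sg_nz
    by (auto simp: j_def ys_def field_simps)
  show "(\<Prod>s\<in>{0..i}. q (js ! s) (js ! i)) * sg a (unitv (js ! i)) *
           thK (madd a (unitv (js ! i)), del_at i js, b) = thK (a, js, b)"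
    unfolding thK_def d j_def[symmetric] unfolding P1 unfolding e
    using L R sg_nz th_nz'
    by (simp add: th_triple th_append mcoef_madd_left mcoef_madd_right field_simps)
  show "(\<Prod>s\<in>{i..<length js}. q (js ! i) (js ! s)) * sg (unitv (js ! i)) b *
           thK (a, del_at i js, madd (unitv (js ! i)) b) = thK (a, js, b)"
    unfolding thK_def d j_def[symmetric] unfolding P2 unfolding e
    using L R sg_nz th_nz'
    by (simp add: th_triple th_append mcoef_madd_left mcoef_madd_right field_simps)
qed

definition dKk :: "kb \<Rightarrow> kb \<Rightarrow> 'k" where
  "dKk = (\<lambda>(a,w,b). lact q N a (ract q N (dK_gen q w) b))"

lemma dK_lin: "dK q N v = lin_ext dKk v"
  by (simp add: dK_def bimod_ext_def dKk_def)

lemma sv_cong: "(\<And>i. i \<in> I \<Longrightarrow> c i = c' i) \<Longrightarrow> (\<And>i. i \<in> I \<Longrightarrow> Y i = Y' i) \<Longrightarrow> sv I c Y = sv I c' Y'"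
  by (simp add: sv_def)

lemma sv_bool: "sv (A \<times> UNIV) c Y = (\<lambda>z. \<Sum>i\<in>A. c (i,True) * vsingle (Y (i,True)) 1 z + c (i,False) * vsingle (Y (i,False)) 1 z)"
  unfolding sv_def by (rule ext) (simp add: sum.cartesian_product' UNIV_bool, rule sum.cong, simp_all add: add.commute)

lemma dK_gen_sv: "dK_gen q js = sv ({..<length js} \<times> UNIV)
   (\<lambda>(i,t). if t then (-1)^i * (\<Prod>s\<in>{0..i}. q (js!s) (js!i)) else - ((-1)^i * (\<Prod>s\<in>{i..<length js}. q (js!i) (js!s))))
   (\<lambda>(i,t). if t then (unitv (js!i), del_at i js, mzero) else (mzero, del_at i js, unitv (js!i)))"
  by (simp add: sv_bool dK_gen_def sum_subtractf fun_eq_iff)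

lemma dK_tw:
  assumes "sorted_wrt (<) js" "set js \<subseteq> {1..N}"
  shows "dKk (a,js,b) = tw thK thK (a,js,b) (dK0 (a,js,b))"
proof -
  define I where "I = {..<length js} \<times> (UNIV :: bool set)"
  define C where "C = (\<lambda>(i,t). if t then (-1)^i * (\<Prod>s\<in>{0..i}. q (js!s) (js!i)) * sg a (unitv (js!i))
       else - ((-1)^i * (\<Prod>s\<in>{i..<length js}. q (js!i) (js!s)) * sg (unitv (js!i)) b))"
  define Yf where "Yf = (\<lambda>(i::nat,t). if t then (madd a (unitv (js!i)), del_at i js, b)
       else (a, del_at i js, madd (unitv (js!i)) b))"
  define e where "e = (\<lambda>(i::nat,t). if t then ((-1)^i :: int) else - ((-1)^i))"
  have fin: "finite I" by (simp add: I_def)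
  have "dKk (a,js,b) = sv I C Yf"
    unfolding dKk_def dK_gen_sv using fin unfolding I_def
    by (simp add: ract_sv lact_sv) (rule sv_cong, auto simp: C_def Yf_def)
  also have "\<dots> = tw thK thK (a,js,b) (\<Sum>i\<in>I. frag_cmul (e i) (frag_of (Yf i)))"
  proof (rule sv_tw[OF fin])
    fix i assume "i \<in> I"
    then obtain k t where i: "i = (k,t)" "k < length js" by (auto simp: I_def)
    show "C i * thK (Yf i) = of_int (e i) * thK (a, js, b)"
    proof (cases t)
      case True
      then show ?thesis using dK_scalar(1)[OF assms i(2), where a=a and b=b]
        by (simp add: i C_def Yf_def e_def mult.assoc)
    next
      case False
      then show ?thesis using dK_scalar(2)[OF assms i(2), where a=a and b=b]
        by (simp add: i C_def Yf_def e_def mult.assoc)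
    qed
  qed (rule thK_nz)
  also have "(\<Sum>i\<in>I. frag_cmul (e i) (frag_of (Yf i))) = dK0 (a,js,b)"
    unfolding I_def dK0_def
    by (simp add: sum.cartesian_product' UNIV_bool e_def Yf_def frag_cmul_diff2 del: minus_frag_cmul)
       (rule sum.cong, simp_all add: minus_frag_cmul[symmetric] del: minus_frag_cmul)
  finally show ?thesis .
qed

definition dBk :: "bb \<Rightarrow> bb \<Rightarrow> 'k" where
  "dBk = (\<lambda>(a, ls, b). let L = a # ls @ [b] in
     (\<lambda>y. \<Sum>i\<le>length ls. (-1) ^ i * mcoef q N (L ! i) (L ! Suc i) *
        vsingle (bar_of_list (take i L @ [madd (L ! i) (L ! Suc i)] @ drop (Suc (Suc i)) L)) 1 y))"

lemma dB_lin: "deltaB q N v = lin_ext dBk v"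
  by (simp add: deltaB_def dBk_def)

lemma th_merge:
  assumes "Suc i < length L"
  shows "th q N L = sg (L!i) (L!Suc i) * th q N (take i L @ [madd (L!i) (L!Suc i)] @ drop (Suc (Suc i)) L)"
proof -
  have "drop i L = L ! i # L ! Suc i # drop (Suc (Suc i)) L"
    using assms by (metis Cons_nth_drop_Suc Suc_lessD)
  then have e: "L = take i L @ [L!i, L!Suc i] @ drop (Suc (Suc i)) L"
    by (metis append_Cons append_Nil append_take_drop_id)
  show ?thesis
    by (subst e) (simp add: th_append mcoef_madd_left mcoef_madd_right mult_ac)
qed

lemma thB_bar:
  assumes "2 \<le> length M"
  shows "thB (bar_of_list M) = th q N M"
proof -
  have M: "M = hd M # tl M" "tl M \<noteq> []" using assms by (cases M; auto)+
  have e: "hd M # butlast (tl M) @ [last (tl M)] = M" using M by (metis append_butlast_last_id append_Cons)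
  have l: "last M = last (tl M)" using M by (metis last_ConsR)
  show ?thesis by (simp only: bar_of_list_def thB_def prod.case l e)
qed

lemma dB_tw:
  assumes "ls \<noteq> []"
  shows "dBk (a,ls,b) = tw thB thB (a,ls,b) (dB0 (a,ls,b))"
proof -
  define L where "L = a # ls @ [b]"
  define Y where "Y = (\<lambda>i. bar_of_list (take i L @ [madd (L ! i) (L ! Suc i)] @ drop (Suc (Suc i)) L))"
  have "dBk (a,ls,b) = sv {..length ls} (\<lambda>i. (-1) ^ i * sg (L ! i) (L ! Suc i)) Y"
    unfolding dBk_def sv_def Y_def L_def by (simp only: Let_def prod.case)
  also have "\<dots> = tw thB thB (a,ls,b) (\<Sum>i\<in>{..length ls}. frag_cmul ((-1)^i) (frag_of (Y i)))"
  proof (rule sv_tw)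
    fix i assume i: "i \<in> {..length ls}"
    have l: "Suc i < length L" using i by (simp add: L_def)
    have A: "thB (Y i) = th q N (take i L @ [madd (L ! i) (L ! Suc i)] @ drop (Suc (Suc i)) L)"
      unfolding Y_def
    proof (rule thB_bar)
      have "length ls \<ge> 1" using assms by (cases ls) auto
      then show "2 \<le> length (take i L @ [madd (L ! i) (L ! Suc i)] @ drop (Suc (Suc i)) L)"
        using l by (simp add: L_def)
    qed
    then show "(-1) ^ i * sg (L ! i) (L ! Suc i) * thB (Y i) = of_int ((-1)^i) * thB (a, ls, b)"
    proof -
      have C: "thB (a,ls,b) = th q N L" by (simp only: thB_def prod.case L_def)
      show ?thesis unfolding A C th_merge[OF l] by (simp add: mult.assoc)
    qed
  qed (auto simp: thB_nz)
  also have "(\<Sum>i\<in>{..length ls}. frag_cmul ((-1)^i) (frag_of (Y i))) = dB0 (a,ls,b)"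
    by (simp only: dB0_def Y_def L_def Let_def prod.case)
  finally show ?thesis .
qed

definition PhiK :: "kb \<Rightarrow> bb \<Rightarrow> 'k" where
  "PhiK = (\<lambda>(a,w,b). lact q N a (ract q N (Phi_gen q N w) b))"

lemma Phi_lin: "Phi q N v = lin_ext PhiK v"
  by (simp add: Phi_def bimod_ext_def PhiK_def)

lemma msum_pw:
  assumes "\<pi> permutes {0..<length js}"
  shows "msum (pw js \<pi>) = msum (map unitv js)"
proof
  fix j
  have "msum (pw js \<pi>) j = (\<Sum>k\<in>{0..<length js}. unitv (js ! \<pi> k) j)"
    by (simp add: msum_apply pw_def sum_list_sum_nth)
  also have "\<dots> = (\<Sum>k\<in>{0..<length js}. unitv (js ! k) j)"
    using sum.permute[OF assms, of "\<lambda>k. unitv (js ! k) j"] by (simp add: comp_def)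
  also have "\<dots> = msum (map unitv js) j"
    by (simp add: msum_apply sum_list_sum_nth)
  finally show "msum (pw js \<pi>) j = msum (map unitv js) j" .
qed

lemma qperm_eq:
  assumes "\<pi> permutes {0..<length js}"
  shows "qperm q N js \<pi> = th q N (map unitv js) / th q N (pw js \<pi>)"
proof -
  have "map unitv (map (\<lambda>k. js ! \<pi> k) [0..<length js]) = pw js \<pi>"
    by (simp add: pw_def)
  then show ?thesis
    unfolding qperm_def word_eq using msum_pw[OF assms]
    by (simp add: the_ratio th_nz')
qed

lemma Phi_tw:
  "PhiK (a,js,b) = tw thK thB (a,js,b) (Phi0 (a,js,b))"
proof -
  define I where "I = {\<pi>. \<pi> permutes {0..<length js}}"
  have fin: "finite I" by (simp add: I_def finite_permutations)
  have "Phi_gen q N js = sv I (\<lambda>\<pi>. of_int (sign \<pi>) * qperm q N js \<pi>) (\<lambda>\<pi>. (mzero, pw js \<pi>, mzero))"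
    by (simp add: Phi_gen_def sv_def I_def pw_def fun_eq_iff mult.assoc)
  then have "PhiK (a,js,b) = sv I (\<lambda>\<pi>. of_int (sign \<pi>) * qperm q N js \<pi>) (\<lambda>\<pi>. (a, pw js \<pi>, b))"
    by (simp add: PhiK_def ract_sv[OF fin] lact_sv[OF fin])
  also have "\<dots> = tw thK thB (a,js,b) (\<Sum>\<pi>\<in>I. frag_cmul (sign \<pi>) (frag_of (a, pw js \<pi>, b)))"
  proof (rule sv_tw[OF fin])
    fix \<pi> assume "\<pi> \<in> I"
    then have p: "\<pi> permutes {0..<length js}" by (simp add: I_def)
    show "of_int (sign \<pi>) * qperm q N js \<pi> * thB (a, pw js \<pi>, b) = of_int (sign \<pi>) * thK (a, js, b)"
      unfolding thB_def thK_def prod.case th_triple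
      using msum_pw[OF p] th_nz'
      by (simp add: qperm_eq[OF p])
  qed (rule thB_nz)
  finally show ?thesis by (simp add: Phi0_def I_def)
qed

end


section \<open>Structure of Q\<close>

definition lft :: "ex \<Rightarrow> nat \<Rightarrow> nat \<Rightarrow> ex" where
  "lft l j r = (\<lambda>k. if j < k then l k else if k = j then r else 0)"
definition rgt :: "ex \<Rightarrow> nat \<Rightarrow> nat \<Rightarrow> ex" where
  "rgt l j r = (\<lambda>k. if k < j then l k else if k = j then l j - r - 1 else 0)"

lemma card_Cons_sorted:
  fixes js :: "nat list"
  assumes "sorted_wrt (<) (j # js)"
  shows "card {i. i < length (j # js) \<and> (j # js) ! i < k} =
         (if j < k then Suc (card {i. i < length js \<and> js ! i < k}) else 0)"
proof (cases "j < k")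
  case True
  have "{i. i < length (j # js) \<and> (j # js) ! i < k} = insert 0 (Suc ` {i. i < length js \<and> js ! i < k})"
  proof (rule set_eqI)
    fix x show "x \<in> {i. i < length (j # js) \<and> (j # js) ! i < k} \<longleftrightarrow> x \<in> insert 0 (Suc ` {i. i < length js \<and> js ! i < k})"
      using True by (cases x) auto
  qed
  then show ?thesis using True by (simp add: card_image)
next
  case False
  have "{i. i < length (j # js) \<and> (j # js) ! i < k} = {}"
  proof (rule set_eqI)
    fix x show "x \<in> {i. i < length (j # js) \<and> (j # js) ! i < k} \<longleftrightarrow> x \<in> {}"
    proof (cases x)
      case (Suc n)
      show ?thesis
      proof
        assume "x \<in> {i. i < length (j # js) \<and> (j # js) ! i < k}"
        then have "n < length js" "js ! n < k" by (auto simp: Suc)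
        moreover have "j < js ! n" using assms \<open>n < length js\<close> by (simp add: nth_mem)
        ultimately have False using False by linarith
        then show "x \<in> {}" ..
      qed simp
    qed (use False in simp)
  qed
  then show ?thesis using False by simp
qed

lemma card_low:
  fixes js :: "nat list"
  assumes "\<forall>x\<in>set js. k \<le> x"
  shows "card {i. i < length js \<and> js ! i < k} = 0"
proof -
  have "\<forall>i<length js. k \<le> js ! i" using assms by (simp add: nth_mem)
  then have "{i. i < length js \<and> js ! i < k} = {}" using not_less by auto
  then show ?thesis by simp
qed

lemma Qvec_low:
  assumes "\<forall>x\<in>set js. k < x"
  shows "Qvec ls js rs k = 0"
proof -
  have c: "card {i. i < length js \<and> js ! i < k} = 0" using assms by (intro card_low) auto
  have "k \<notin> set js" using assms by auto
  then show ?thesis by (simp add: Qvec_def c)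
qed

lemma Qvec_Nil: "Qvec [] [] [] = mzero"
  by (simp add: Qvec_def mzero_def fun_eq_iff)

lemma Qhat_Nil: "Qhat [] [] [] = mzero"
  by (simp add: Qhat_def mzero_def fun_eq_iff)

lemma sum_nth_Cons: "(\<Sum>t<Suc (length ls). ((l # ls) ! t) k) = l k + (\<Sum>t<length ls. (ls ! t) k)"
  by (simp only: sum.lessThan_Suc_shift) simp

lemma Qvec_Cons:
  assumes "sorted_wrt (<) (j # js)" "length ls = length js" "length rs = length js"
  shows "Qvec (l # ls) (j # js) (r # rs) = madd (lft l j r) (Qvec ls js rs)"
proof
  fix k
  have gt: "\<forall>x\<in>set js. j < x" using assms(1) by simp
  show "Qvec (l # ls) (j # js) (r # rs) k = madd (lft l j r) (Qvec ls js rs) k"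
  proof (cases "j < k")
    case True
    define c where "c = card {i. i < length js \<and> js ! i < k}"
    have c1: "card {i. i < length (j # js) \<and> (j # js) ! i < k} = Suc c"
      using card_Cons_sorted[OF assms(1), of k] True by (simp add: c_def)
    have m: "k \<in> set (j # js) \<longleftrightarrow> k \<in> set js" using True by auto
    have "Qvec (l # ls) (j # js) (r # rs) k = (if k \<in> set js then rs ! c else 0) + (\<Sum>t<Suc c. ((l # ls) ! t) k)"
      by (simp only: Qvec_def Let_def c1 m) simp
    also have "(\<Sum>t<Suc c. ((l # ls) ! t) k) = l k + (\<Sum>t<c. (ls ! t) k)"
      by (simp only: sum.lessThan_Suc_shift) simp
    finally show ?thesis using True by (simp add: Qvec_def c_def madd_def lft_def Let_def)
  next
    case False
    have low: "Qvec ls js rs k = 0" by (rule Qvec_low) (use gt False in auto)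
    have notin: "k \<notin> set js" using gt False by auto
    have c1: "card {i. i < length (j # js) \<and> (j # js) ! i < k} = 0"
      using card_Cons_sorted[OF assms(1), of k] False by simp
    have "Qvec (l # ls) (j # js) (r # rs) k = (if k \<in> set (j # js) then r else 0)"
      by (simp only: Qvec_def Let_def c1) simp
    then show ?thesis using False low notin by (auto simp: madd_def lft_def)
  qed
qed

definition rfit :: "ex list \<Rightarrow> nat list \<Rightarrow> nat list \<Rightarrow> bool" where
  "rfit ls js rs \<longleftrightarrow> sorted_wrt (<) js \<and> length ls = length js \<and> length rs = length js \<and>
     (\<forall>s<length js. rs ! s < (ls ! s) (js ! s))"

lemma rfit_Cons: "rfit (l # ls) (j # js) (r # rs) \<longleftrightarrow>
    sorted_wrt (<) (j # js) \<and> r < l j \<and> rfit ls js rs"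
  by (auto simp: rfit_def All_less_Suc2)

lemma rfit_Nil: "rfit [] [] []"
  by (simp add: rfit_def)

lemma Qle:
  "rfit ls js rs \<Longrightarrow> Qvec ls js rs k + (if k \<in> set js then 1 else 0) \<le> (\<Sum>t<length ls. (ls ! t) k)"
proof (induction js arbitrary: ls rs)
  case Nil
  then have "ls = []" "rs = []" by (auto simp: rfit_def)
  then show ?case by (simp add: Qvec_Nil mzero_def)
next
  case (Cons j js)
  obtain l ls' r rs' where e: "ls = l # ls'" "rs = r # rs'"
    using Cons.prems by (cases ls; cases rs) (auto simp: rfit_def)
  have R: "sorted_wrt (<) (j # js)" "r < l j" "rfit ls' js rs'" using Cons.prems by (auto simp: e rfit_Cons)
  have IH: "Qvec ls' js rs' k + (if k \<in> set js then 1 else 0) \<le> (\<Sum>t<length ls'. (ls' ! t) k)"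
    using Cons.IH[OF R(3)] .
  have len: "length ls' = length js" "length rs' = length js" using R(3) by (auto simp: rfit_def)
  have notin: "k = j \<Longrightarrow> k \<notin> set js" using R(1) by auto
  have a: "lft l j r k + (if k = j then 1 else 0) \<le> l k" using R(2) by (auto simp: lft_def)
  show ?case
    unfolding e length_Cons sum_nth_Cons Qvec_Cons[OF R(1) len]
    using IH a notin by (auto simp: madd_def)
qed

lemma Qhat_Cons:
  assumes "rfit (l # ls) (j # js) (r # rs)"
  shows "Qhat (l # ls) (j # js) (r # rs) = madd (rgt l j r) (Qhat ls js rs)"
proof
  fix k
  have R: "sorted_wrt (<) (j # js)" "r < l j" "rfit ls js rs" using assms by (auto simp: rfit_Cons)
  have len: "length ls = length js" "length rs = length js" using R(3) by (auto simp: rfit_def)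
  have IH: "Qvec ls js rs k + (if k \<in> set js then 1 else 0) \<le> (\<Sum>t<length ls. (ls ! t) k)"
    using Qle[OF R(3)] .
  have notin: "k = j \<Longrightarrow> k \<notin> set js" using R(1) by auto
  have a: "lft l j r k + (if k = j then 1 else 0) \<le> l k" using R(2) by (auto simp: lft_def)
  have b: "rgt l j r k = l k - lft l j r k - (if k = j then 1 else 0)"
    by (auto simp: rgt_def lft_def)
  show "Qhat (l # ls) (j # js) (r # rs) k = madd (rgt l j r) (Qhat ls js rs) k"
    using IH a notin unfolding Qhat_def length_Cons sum_nth_Cons Qvec_Cons[OF R(1) len]
    by (auto simp: madd_def b)
qed

lemma msum_unitv_distinct:
  assumes "distinct js"
  shows "msum (map unitv js) k = (if k \<in> set js then 1 else 0)"
proof -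
  have "msum (map unitv js) k = (\<Sum>x\<leftarrow>js. unitv x k)" by (simp add: msum_apply comp_def)
  also have "\<dots> = (\<Sum>x\<in>set js. unitv x k)" using assms by (simp add: sum.distinct_set_conv_list)
  also have "\<dots> = (if k \<in> set js then 1 else 0)" by (simp add: unitv_def sum.delta eq_commute)
  finally show ?thesis .
qed

lemma msum_nth: "msum ls k = (\<Sum>t<length ls. (ls ! t) k)"
  by (simp add: msum_apply sum_list_sum_nth atLeast0LessThan)

lemma Q_total:
  assumes "rfit ls js rs"
  shows "madd (Qvec ls js rs) (madd (msum (map unitv js)) (Qhat ls js rs)) = msum ls"
proof
  fix k
  have d: "distinct js" using assms by (auto simp: rfit_def strict_sorted_iff)
  show "madd (Qvec ls js rs) (madd (msum (map unitv js)) (Qhat ls js rs)) k = msum ls k"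
    using Qle[OF assms, of k] by (simp add: madd_def msum_unitv_distinct[OF d] Qhat_def msum_nth[of ls])
qed


definition Psi0 :: "nat \<Rightarrow> bb \<Rightarrow> kb \<Rightarrow>\<^sub>0 int" where
  "Psi0 N x = (case x of (a,ls,b) \<Rightarrow> if ls = [] then frag_of (a, [], b) else
     (\<Sum>(js,rs)\<in>(SIGMA js:incseqs N (length ls). rsets ls js).
        frag_of (madd a (Qvec ls js rs), js, madd (Qhat ls js rs) b)))"

lemma finite_incseqs: "finite (incseqs N p)"
proof -
  have "incseqs N p \<subseteq> {js. set js \<subseteq> {1..N} \<and> length js = p}" by (auto simp: incseqs_def)
  then show ?thesis using finite_lists_length_eq[of "{1..N}" p] finite_subset by auto
qed

lemma finite_rsets: "finite (rsets ls js)"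
proof -
  define B where "B = (\<Sum>s<length js. (ls ! s) (js ! s))"
  have "rsets ls js \<subseteq> {rs. set rs \<subseteq> {..<B} \<and> length rs = length js}"
  proof
    fix rs assume "rs \<in> rsets ls js"
    then have r: "length rs = length js" "\<forall>s<length js. rs ! s < (ls ! s) (js ! s)" by (auto simp: rsets_def)
    have "\<forall>s<length js. rs ! s < B"
    proof (intro allI impI)
      fix s assume "s < length js"
      then have "(ls ! s) (js ! s) \<le> B" unfolding B_def by (intro member_le_sum) auto
      then show "rs ! s < B" using r \<open>s < length js\<close> by (meson less_le_trans)
    qed
    then show "rs \<in> {rs. set rs \<subseteq> {..<B} \<and> length rs = length js}"
      using r by (auto simp: in_set_conv_nth)
  qed
  then show ?thesis using finite_lists_length_eq[of "{..<B}" "length js"] finite_subset by auto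
qed

lemma rfit_of:
  assumes "js \<in> incseqs N (length ls)" "rs \<in> rsets ls js"
  shows "rfit ls js rs"
  using assms by (auto simp: incseqs_def rsets_def rfit_def)

context qsys
begin

definition PsiK :: "bb \<Rightarrow> kb \<Rightarrow> 'k" where
  "PsiK = (\<lambda>(a,w,b). lact q N a (ract q N (Psi_gen q N w) b))"

lemma Psi_lin: "Psi q N v = lin_ext PsiK v"
  by (simp add: Psi_def bimod_ext_def PsiK_def)

lemma mu_eq:
  assumes "rfit ls js rs"
  shows "mu q N ls js rs = th q N ls /
     (th q N (map unitv js) * sg (msum (map unitv js)) (Qhat ls js rs) *
      sg (Qvec ls js rs) (madd (msum (map unitv js)) (Qhat ls js rs)))"
proof -
  have "amul q N (mon (Qvec ls js rs)) (amul q N (word q N js) (mon (Qhat ls js rs))) =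
    vsingle (msum ls) (th q N (map unitv js) * sg (msum (map unitv js)) (Qhat ls js rs) *
      sg (Qvec ls js rs) (madd (msum (map unitv js)) (Qhat ls js rs)))"
    by (simp add: mon_def word_eq amul_vsingle Q_total[OF assms])
  then show ?thesis
    unfolding mu_def monprod_eq by (simp add: the_ratio th_nz' sg_nz)
qed

lemma Psi_tw: "PsiK (a,ls,b) = tw thB thK (a,ls,b) (Psi0 N (a,ls,b))"
proof (cases "ls = []")
  case True
  have "PsiK (a,ls,b) = vsingle (a, [], b) 1"
    using True by (simp add: PsiK_def Psi_gen_def lact_def ract_def lin_ext_vsingle)
  also have "\<dots> = tw thB thK (a,ls,b) (Psi0 N (a,ls,b))"
  proof
    fix y
    have eq: "thB (a,[],b) = thK (a,[],b)" by (simp add: thB_def thK_def)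
    show "vsingle (a, [], b) 1 y = tw thB thK (a,ls,b) (Psi0 N (a,ls,b)) y"
      by (cases "y = (a,[],b)") (simp_all add: Psi0_def tw_def True eq thK_nz vsingle_def)
  qed
  finally show ?thesis .
next
  case False
  define I where "I = (SIGMA js:incseqs N (length ls). rsets ls js)"
  have fin: "finite I" unfolding I_def by (intro finite_SigmaI finite_incseqs finite_rsets)
  have "Psi_gen q N ls = sv I (\<lambda>(js,rs). mu q N ls js rs) (\<lambda>(js,rs). (Qvec ls js rs, js, Qhat ls js rs))"
    using False unfolding Psi_gen_def sv_def I_def
    by (simp add: sum.Sigma[OF finite_incseqs] finite_rsets split_def fun_eq_iff)
  then have "PsiK (a,ls,b) = sv I (\<lambda>i. (case i of (js,rs) \<Rightarrow> mu q N ls js rs) *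
          sg (Qhat ls (fst i) (snd i)) b * sg a (Qvec ls (fst i) (snd i)))
       (\<lambda>i. (madd a (Qvec ls (fst i) (snd i)), fst i, madd (Qhat ls (fst i) (snd i)) b))"
    by (simp add: PsiK_def ract_sv[OF fin] lact_sv[OF fin] split_def)
  also have "\<dots> = tw thB thK (a,ls,b) (\<Sum>i\<in>I. frag_cmul 1 (frag_of (madd a (Qvec ls (fst i) (snd i)), fst i, madd (Qhat ls (fst i) (snd i)) b)))"
  proof (rule sv_tw[OF fin])
    fix i assume "i \<in> I"
    then obtain js rs where i: "i = (js,rs)" "js \<in> incseqs N (length ls)" "rs \<in> rsets ls js"
      by (auto simp: I_def)
    have R: "rfit ls js rs" using rfit_of[OF i(2,3)] .
    note T = Q_total[OF R]
    show "(case i of (js,rs) \<Rightarrow> mu q N ls js rs) * sg (Qhat ls (fst i) (snd i)) b * sg a (Qvec ls (fst i) (snd i)) *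
        thK (madd a (Qvec ls (fst i) (snd i)), fst i, madd (Qhat ls (fst i) (snd i)) b) = of_int 1 * thB (a, ls, b)"
      unfolding i prod.case fst_conv snd_conv mu_eq[OF R] thK_def thB_def th_triple T[symmetric]
      using th_nz' sg_nz
      by (simp add: mcoef_madd_left mcoef_madd_right field_simps)
  qed (rule thK_nz)
  also have "(\<Sum>i\<in>I. frag_cmul 1 (frag_of (madd a (Qvec ls (fst i) (snd i)), fst i, madd (Qhat ls (fst i) (snd i)) b))) = Psi0 N (a,ls,b)"
    using False by (simp add: Psi0_def I_def split_def)
  finally show ?thesis .
qed

end


lemma fe_fun_add: "frag_extend (\<lambda>x. f x + g x) u = frag_extend f u + frag_extend g u"
  by (simp add: frag_extend_def frag_cmul_distrib2 sum.distrib)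

lemma fe_fun_diff: "frag_extend (\<lambda>x. f x - g x) u = frag_extend f u - frag_extend g u"
  by (simp add: frag_extend_def frag_cmul_diff2 sum_subtractf)

lemma fe_fun_cmul: "frag_extend (\<lambda>x. frag_cmul c (f x)) u = frag_cmul c (frag_extend f u)"
  by (simp add: frag_extend_def frag_cmul_sum mult.commute)

lemma fe_fun_zero: "frag_extend (\<lambda>x. 0) u = 0"
  by (simp add: frag_extend_def)

lemma fe_fun_sum: "frag_extend (\<lambda>x. \<Sum>i\<in>I. f i x) u = (\<Sum>i\<in>I. frag_extend (f i) u)"
proof (induction I rule: infinite_finite_induct)
  case (infinite I) then show ?case by (simp add: fe_fun_zero)
next
  case empty then show ?case by (simp add: fe_fun_zero)
next
  case (insert i I) then show ?case by (simp add: fe_fun_add)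
qed

lemma fe_compose: "frag_extend f (frag_extend g u) = frag_extend (\<lambda>x. frag_extend f (g x)) u"
  using subset_UNIV
  by (induction u rule: frag_induction) (auto simp: frag_extend_diff)

lemma fe_cong_keys: "(\<And>x. x \<in> Poly_Mapping.keys u \<Longrightarrow> f x = g x) \<Longrightarrow> frag_extend f u = frag_extend g u"
  by (rule frag_extend_eq)

section \<open>Concatenation product on the Koszul side\<close>

definition kcat :: "kb \<Rightarrow> kb \<Rightarrow> kb" where
  "kcat x y = (case x of (a,J,b) \<Rightarrow> case y of (c,J',d) \<Rightarrow> (madd a c, J @ J', madd b d))"

lemma kcat_simp [simp]: "kcat (a,J,b) (c,J',d) = (madd a c, J @ J', madd b d)"
  by (simp add: kcat_def)

lemma kcat_assoc: "kcat (kcat x y) z = kcat x (kcat y z)"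
  by (cases x; cases y; cases z) (simp add: madd_assoc)

definition kmul :: "(kb \<Rightarrow>\<^sub>0 int) \<Rightarrow> (kb \<Rightarrow>\<^sub>0 int) \<Rightarrow> kb \<Rightarrow>\<^sub>0 int" where
  "kmul u v = frag_extend (\<lambda>x. frag_extend (\<lambda>y. frag_of (kcat x y)) v) u"

lemma kmul_of_left: "kmul (frag_of x) v = frag_extend (\<lambda>y. frag_of (kcat x y)) v"
  by (simp add: kmul_def)

lemma kmul_of_of [simp]: "kmul (frag_of x) (frag_of y) = frag_of (kcat x y)"
  by (simp add: kmul_def)

lemma kmul_of_right: "kmul u (frag_of y) = frag_extend (\<lambda>x. frag_of (kcat x y)) u"
  by (simp add: kmul_def)

lemma kmul_add1: "kmul (u + u') v = kmul u v + kmul u' v" by (simp add: kmul_def frag_extend_add)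
lemma kmul_diff1: "kmul (u - u') v = kmul u v - kmul u' v" by (simp add: kmul_def frag_extend_diff)
lemma kmul_cmul1: "kmul (frag_cmul c u) v = frag_cmul c (kmul u v)" by (simp add: kmul_def frag_extend_cmul)
lemma kmul_zero1 [simp]: "kmul 0 v = 0" by (simp add: kmul_def)
lemma kmul_sum1: "finite I \<Longrightarrow> kmul (\<Sum>i\<in>I. f i) v = (\<Sum>i\<in>I. kmul (f i) v)"
  by (simp add: kmul_def frag_extend_sum comp_def)
lemma kmul_add2: "kmul u (v + v') = kmul u v + kmul u v'" by (simp add: kmul_def frag_extend_add fe_fun_add)
lemma kmul_diff2: "kmul u (v - v') = kmul u v - kmul u v'" by (simp add: kmul_def frag_extend_diff fe_fun_diff)
lemma kmul_cmul2: "kmul u (frag_cmul c v) = frag_cmul c (kmul u v)" by (simp add: kmul_def frag_extend_cmul fe_fun_cmul)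
lemma kmul_zero2 [simp]: "kmul u 0 = 0" by (simp add: kmul_def fe_fun_zero)
lemma kmul_sum2: "finite I \<Longrightarrow> kmul u (\<Sum>i\<in>I. f i) = (\<Sum>i\<in>I. kmul u (f i))"
  by (simp add: kmul_def frag_extend_sum comp_def fe_fun_sum)

lemma kmul_assoc: "kmul (kmul u v) w = kmul u (kmul v w)"
proof -
  have A: "kmul (frag_of (kcat x y)) w = kmul (frag_of x) (kmul (frag_of y) w)" for x y
    using subset_UNIV
    by (induction w rule: frag_induction) (auto simp: kmul_diff2 kcat_assoc)
  have B: "kmul (kmul (frag_of x) v) w = kmul (frag_of x) (kmul v w)" for x
    using subset_UNIV
    by (induction v rule: frag_induction) (auto simp: kmul_diff2 kmul_diff1 A)
  show ?thesis
    using subset_UNIV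
    by (induction u rule: frag_induction) (auto simp: kmul_diff1 B)
qed

definition unit0 :: "kb \<Rightarrow>\<^sub>0 int" where "unit0 = frag_of (mzero, [], mzero)"

lemma kmul_unit0_left [simp]: "kmul unit0 v = v"
  using subset_UNIV by (induction v rule: frag_induction) (auto simp: unit0_def kmul_diff2 kcat_def split: prod.splits)

lemma kmul_unit0_right [simp]: "kmul v unit0 = v"
  using subset_UNIV by (induction v rule: frag_induction) (auto simp: unit0_def kmul_diff1 kcat_def split: prod.splits)

section \<open>Koszul differential, untwisted\<close>

definition Dk :: "(kb \<Rightarrow>\<^sub>0 int) \<Rightarrow> kb \<Rightarrow>\<^sub>0 int" where "Dk = frag_extend dK0"

definition kdeg :: "kb \<Rightarrow> nat" where "kdeg x = length (fst (snd x))"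

lemma Dk_of [simp]: "Dk (frag_of x) = dK0 x" by (simp add: Dk_def)
lemma Dk_add: "Dk (u + v) = Dk u + Dk v" by (simp add: Dk_def frag_extend_add)
lemma Dk_diff: "Dk (u - v) = Dk u - Dk v" by (simp add: Dk_def frag_extend_diff)
lemma Dk_cmul: "Dk (frag_cmul c u) = frag_cmul c (Dk u)" by (simp add: Dk_def frag_extend_cmul)
lemma Dk_sum: "finite I \<Longrightarrow> Dk (\<Sum>i\<in>I. f i) = (\<Sum>i\<in>I. Dk (f i))" by (simp add: Dk_def frag_extend_sum comp_def)
lemma Dk_zero [simp]: "Dk 0 = 0" by (simp add: Dk_def)

lemma sum_lessThan_add: "(\<Sum>i<m + (n::nat). f i) = (\<Sum>i<m. f i) + (\<Sum>i<n. f (m + i))"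
  by (induction n) (simp_all add: add.assoc)

lemma del_at_append1: "i < length J \<Longrightarrow> del_at i (J @ J') = del_at i J @ J'"
  by (simp add: del_at_def)

lemma del_at_append2: "del_at (length J + i) (J @ J') = J @ del_at i J'"
  by (simp add: del_at_def)

lemma dK0_kcat:
  "dK0 (kcat x y) = kmul (dK0 x) (frag_of y) + frag_cmul ((-1) ^ kdeg x) (kmul (frag_of x) (dK0 y))"
proof -
  obtain a J b where x: "x = (a,J,b)" by (cases x) auto
  obtain c J' d where y: "y = (c,J',d)" by (cases y) auto
  have s1: "(\<Sum>i<length J. frag_cmul ((-1)^i)
      (frag_of (madd (madd a c) (unitv ((J @ J') ! i)), del_at i (J @ J'), madd b d) -
       frag_of (madd a c, del_at i (J @ J'), madd (unitv ((J @ J') ! i)) (madd b d))))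
     = kmul (dK0 x) (frag_of y)"
    unfolding x y dK0_def prod.case kmul_sum1[OF finite_lessThan] kmul_cmul1 kmul_diff1 kmul_of_of
    by (intro sum.cong refl) (simp add: nth_append del_at_append1 madd_ac)
  have s2: "(\<Sum>i<length J'. frag_cmul ((-1)^(length J + i))
      (frag_of (madd (madd a c) (unitv ((J @ J') ! (length J + i))), del_at (length J + i) (J @ J'), madd b d) -
       frag_of (madd a c, del_at (length J + i) (J @ J'), madd (unitv ((J @ J') ! (length J + i))) (madd b d))))
     = frag_cmul ((-1) ^ kdeg x) (kmul (frag_of x) (dK0 y))"
    unfolding x y dK0_def prod.case kmul_sum2[OF finite_lessThan] kmul_cmul2 kmul_diff2 kmul_of_of frag_cmul_sum
    by (intro sum.cong refl) (simp add: kdeg_def del_at_append2 madd_ac power_add)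
  show ?thesis
    unfolding s1[symmetric] s2[symmetric]
    by (simp add: x y dK0_def sum_lessThan_add)
qed

lemma Dk_kmul_of: "Dk (kmul (frag_of x) v) = kmul (Dk (frag_of x)) v + frag_cmul ((-1) ^ kdeg x) (kmul (frag_of x) (Dk v))"
  using subset_UNIV
  by (induction v rule: frag_induction)
     (auto simp: dK0_kcat kmul_diff2 Dk_diff kmul_of_left[symmetric] frag_cmul_diff2 algebra_simps)

lemma Dk_kmul:
  assumes "Poly_Mapping.keys u \<subseteq> {x. kdeg x = p}"
  shows "Dk (kmul u v) = kmul (Dk u) v + frag_cmul ((-1) ^ p) (kmul u (Dk v))"
  using assms
proof (induction u rule: frag_induction)
  case (one x)
  then show ?case using Dk_kmul_of[of x v] by simp
next
  case (diff a b)
  then show ?case by (simp add: kmul_diff1 Dk_diff kmul_diff2 frag_cmul_diff2 algebra_simps)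
qed simp


definition psi :: "nat \<Rightarrow> ex \<Rightarrow> kb \<Rightarrow>\<^sub>0 int" where
  "psi j l = (\<Sum>r<l j. frag_of (lft l j r, [j], rgt l j r))"

definition gg :: "nat \<Rightarrow> ex \<Rightarrow> kb \<Rightarrow>\<^sub>0 int" where
  "gg j l = frag_of (\<lambda>k. if j \<le> k then l k else 0, [], \<lambda>k. if k < j then l k else 0)"

lemma D_psi: "Dk (psi j l) = gg j l - gg (Suc j) l"
proof -
  define F where "F r = frag_of (lft l j r, [] :: nat list, \<lambda>k. if k < j then l k else if k = j then l j - r else 0)" for r
  have t: "dK0 (lft l j r, [j], rgt l j r) = F (Suc r) - F r" if "r < l j" for r
  proof -
    have "madd (lft l j r) (unitv j) = lft l j (Suc r)"
      by (auto simp: madd_def lft_def unitv_def)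
    moreover have "rgt l j r = (\<lambda>k. if k < j then l k else if k = j then l j - Suc r else 0)"
      by (auto simp: rgt_def)
    moreover have "madd (unitv j) (rgt l j r) = (\<lambda>k. if k < j then l k else if k = j then l j - r else 0)"
      using that by (auto simp: madd_def rgt_def unitv_def fun_eq_iff)
    ultimately show ?thesis by (simp add: dK0_def F_def del_at_def)
  qed
  have "Dk (psi j l) = (\<Sum>r<l j. F (Suc r) - F r)"
    unfolding psi_def by (simp add: Dk_sum t)
  also have "\<dots> = F (l j) - F 0" by (rule sum_lessThan_telescope)
  also have "F (l j) = gg j l" unfolding F_def gg_def
    by (rule arg_cong[where f=frag_of]) (auto simp: lft_def fun_eq_iff)
  also have "F 0 = gg (Suc j) l" unfolding F_def gg_def
    by (rule arg_cong[where f=frag_of]) (auto simp: lft_def fun_eq_iff less_Suc_eq)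
  finally show ?thesis .
qed

lemma psi_split: "psi j (madd l m) = kmul (psi j l) (gg (Suc j) m) + kmul (gg j l) (psi j m)"
proof -
  have "psi j (madd l m) = (\<Sum>r<l j. frag_of (lft (madd l m) j r, [j], rgt (madd l m) j r))
      + (\<Sum>r<m j. frag_of (lft (madd l m) j (l j + r), [j], rgt (madd l m) j (l j + r)))"
    unfolding psi_def by (simp add: madd_def sum_lessThan_add)
  also have "(\<Sum>r<l j. frag_of (lft (madd l m) j r, [j], rgt (madd l m) j r)) = kmul (psi j l) (gg (Suc j) m)"
    unfolding psi_def gg_def kmul_sum1[OF finite_lessThan] kmul_of_of
    by (intro sum.cong refl arg_cong[where f=frag_of]) (auto simp: lft_def rgt_def madd_def fun_eq_iff)
  also have "(\<Sum>r<m j. frag_of (lft (madd l m) j (l j + r), [j], rgt (madd l m) j (l j + r))) = kmul (gg j l) (psi j m)"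
    unfolding psi_def gg_def kmul_sum2[OF finite_lessThan] kmul_of_of
    by (intro sum.cong refl arg_cong[where f=frag_of]) (auto simp: lft_def rgt_def madd_def fun_eq_iff)
  finally show ?thesis .
qed

lemma keys_psi: "Poly_Mapping.keys (psi j l) \<subseteq> {x. kdeg x = 1}"
  unfolding psi_def using keys_sum by (fastforce simp: kdeg_def)

lemma Dk_gg [simp]: "Dk (gg j l) = 0"
  by (simp add: gg_def dK0_def)

lemma keys_gg: "Poly_Mapping.keys (gg j l) \<subseteq> {x. kdeg x = 0}"
  by (simp add: gg_def kdeg_def)

fun Pk :: "nat \<Rightarrow> ex list \<Rightarrow> nat \<Rightarrow> kb \<Rightarrow>\<^sub>0 int" where
  "Pk N [] lo = unit0"
| "Pk N (l # ls) lo = (\<Sum>j\<in>{lo<..N}. kmul (psi j l) (Pk N ls j))"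

lemma tele1:
  fixes f :: "nat \<Rightarrow> 'a::ab_group_add"
  shows "lo \<le> N \<Longrightarrow> (\<Sum>j\<in>{lo<..N}. f j - f (Suc j)) = f (Suc lo) - f (Suc N)"
proof (induction N)
  case 0 then show ?case by simp
next
  case (Suc N)
  show ?case
  proof (cases "lo = Suc N")
    case True then show ?thesis by simp
  next
    case False
    then have "lo \<le> N" using Suc.prems by simp
    moreover have "{lo<..Suc N} = insert (Suc N) {lo<..N}" using \<open>lo \<le> N\<close> by auto
    ultimately show ?thesis using Suc.IH by simp
  qed
qed

lemma tele2:
  fixes f :: "nat \<Rightarrow> 'a::ab_group_add"
  assumes "lo < k"
  shows "(\<Sum>j\<in>{lo<..<k}. f j - f (Suc j)) = f (Suc lo) - f k"
proof -
  obtain N where k: "k = Suc N" "lo \<le> N" using assms by (cases k) auto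
  have "{lo<..<k} = {lo<..N}" using k by auto
  then show ?thesis using tele1[OF k(2), of f] k by simp
qed

definition mrg :: "nat \<Rightarrow> ex list \<Rightarrow> ex list" where
  "mrg t ls = take (t - 1) ls @ [madd (ls ! (t - 1)) (ls ! t)] @ drop (Suc t) ls"

lemma mrg_1: "mrg (Suc 0) (l # m # ms) = madd l m # ms"
  by (simp add: mrg_def)

lemma mrg_Suc: "1 \<le> t \<Longrightarrow> mrg (Suc t) (l # ls) = l # mrg t ls"
  by (cases t) (simp_all add: mrg_def)

definition Cf :: "nat \<Rightarrow> ex list \<Rightarrow> nat \<Rightarrow> kb \<Rightarrow>\<^sub>0 int" where
  "Cf N ls lo = kmul (gg (Suc lo) (hd ls)) (Pk N (tl ls) lo)
     + (\<Sum>t\<in>{1..<length ls}. frag_cmul ((-1)^t) (Pk N (mrg t ls) lo))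
     + frag_cmul ((-1)^(length ls)) (kmul (Pk N (butlast ls) lo) (gg (Suc N) (last ls)))"

lemma gg_high:
  assumes "l \<in> expvecs N" "N \<le> lo"
  shows "gg (Suc lo) l = gg (Suc N) l"
proof -
  have z: "\<And>k. N < k \<Longrightarrow> l k = 0" using assms(1) by (auto simp: expvecs_def)
  show ?thesis unfolding gg_def
    by (rule arg_cong[where f=frag_of]) (use z assms(2) in \<open>auto simp: fun_eq_iff\<close>)
qed

lemma swap_tri:
  fixes lo N :: nat
  shows "(\<Sum>j\<in>{lo<..N}. \<Sum>k\<in>{j<..N}. g j k) = (\<Sum>k\<in>{lo<..N}. \<Sum>j\<in>{lo<..<k}. g j k)"
proof -
  have "(\<Sum>j\<in>{lo<..N}. \<Sum>k\<in>{k\<in>{lo<..N}. j < k}. g j k) = (\<Sum>k\<in>{lo<..N}. \<Sum>j\<in>{j\<in>{lo<..N}. j < k}. g j k)"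
    by (rule sum.swap_restrict) simp_all
  moreover have "\<And>j. j \<in> {lo<..N} \<Longrightarrow> {k\<in>{lo<..N}. j < k} = {j<..N}" by auto
  moreover have "\<And>k. k \<in> {lo<..N} \<Longrightarrow> {j\<in>{lo<..N}. j < k} = {lo<..<k}" by auto
  ultimately show ?thesis
    by (smt (verit, ccfv_SIG) sum.cong)
qed


lemma Dk_unit0 [simp]: "Dk unit0 = 0"
  by (simp add: unit0_def dK0_def)

lemma ab_assemble:
  fixes X :: "'a::ab_group_add"
  assumes "X = (G - A) - (B + T + Dt)" "A + B = M"
  shows "X = G + (- M - T) + - Dt"
proof -
  have "M = A + B" using assms(2) by simp
  then show ?thesis using assms(1) by (simp add: algebra_simps)
qed

lemma DP:
  assumes "ls \<noteq> []" "set ls \<subseteq> expvecs N"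
  shows "Dk (Pk N ls lo) = Cf N ls lo"
  using assms
proof (induction ls arbitrary: lo)
  case Nil then show ?case by simp
next
  case (Cons l ls)
  have lE: "l \<in> expvecs N" using Cons.prems by simp
  have S1: "Dk (Pk N (l # ls) lo) = (\<Sum>j\<in>{lo<..N}. kmul (gg j l - gg (Suc j) l) (Pk N ls j))
      - (\<Sum>j\<in>{lo<..N}. kmul (psi j l) (Dk (Pk N ls j)))"
  proof -
    have "Dk (Pk N (l#ls) lo) = (\<Sum>j\<in>{lo<..N}. Dk (kmul (psi j l) (Pk N ls j)))" by (simp add: Dk_sum)
    also have "\<dots> = (\<Sum>j\<in>{lo<..N}. kmul (gg j l - gg (Suc j) l) (Pk N ls j) - kmul (psi j l) (Dk (Pk N ls j)))"
      by (rule sum.cong[OF refl]) (simp add: Dk_kmul[OF keys_psi] D_psi)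
    finally show ?thesis by (simp add: sum_subtractf)
  qed
  show ?case
  proof (cases "ls = []")
    case True
    have "Dk (Pk N (l # ls) lo) = (\<Sum>j\<in>{lo<..N}. gg j l - gg (Suc j) l)" using S1 True by simp
    also have "\<dots> = gg (Suc lo) l - gg (Suc N) l"
    proof (cases "lo \<le> N")
      case True then show ?thesis by (rule tele1)
    next
      case False then show ?thesis using gg_high[OF lE, of lo] by simp
    qed
    finally show ?thesis using True by (simp add: Cf_def)
  next
    case False
    then obtain m ms where ls: "ls = m # ms" by (cases ls) auto
    have IH: "\<And>j. Dk (Pk N ls j) = Cf N ls j" using Cons.IH False Cons.prems by simp
    have S2: "(\<Sum>j\<in>{lo<..N}. kmul (gg j l - gg (Suc j) l) (Pk N ls j)) =
        kmul (gg (Suc lo) l) (Pk N ls lo) - (\<Sum>k\<in>{lo<..N}. kmul (kmul (gg k l) (psi k m)) (Pk N ms k))"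
    proof -
      have "(\<Sum>j\<in>{lo<..N}. kmul (gg j l - gg (Suc j) l) (Pk N ls j)) =
          (\<Sum>j\<in>{lo<..N}. \<Sum>k\<in>{j<..N}. kmul (gg j l - gg (Suc j) l) (kmul (psi k m) (Pk N ms k)))"
        by (simp add: ls kmul_sum2)
      also have "\<dots> = (\<Sum>k\<in>{lo<..N}. \<Sum>j\<in>{lo<..<k}. kmul (gg j l - gg (Suc j) l) (kmul (psi k m) (Pk N ms k)))"
        by (rule swap_tri)
      also have "\<dots> = (\<Sum>k\<in>{lo<..N}. kmul (gg (Suc lo) l - gg k l) (kmul (psi k m) (Pk N ms k)))"
      proof (rule sum.cong[OF refl])
        fix k assume "k \<in> {lo<..N}"
        then have "(\<Sum>j\<in>{lo<..<k}. gg j l - gg (Suc j) l) = gg (Suc lo) l - gg k l"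
          by (intro tele2) auto
        then show "(\<Sum>j\<in>{lo<..<k}. kmul (gg j l - gg (Suc j) l) (kmul (psi k m) (Pk N ms k))) =
            kmul (gg (Suc lo) l - gg k l) (kmul (psi k m) (Pk N ms k))"
          by (simp add: kmul_sum1[symmetric])
      qed
      also have "\<dots> = kmul (gg (Suc lo) l) (Pk N ls lo) - (\<Sum>k\<in>{lo<..N}. kmul (kmul (gg k l) (psi k m)) (Pk N ms k))"
        by (simp add: ls kmul_diff1 sum_subtractf kmul_sum2 kmul_assoc)
      finally show ?thesis .
    qed
    have S3a: "(\<Sum>j\<in>{lo<..N}. kmul (psi j l) (kmul (gg (Suc j) (hd ls)) (Pk N (tl ls) j))) =
        (\<Sum>j\<in>{lo<..N}. kmul (kmul (psi j l) (gg (Suc j) m)) (Pk N ms j))"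
      by (simp add: ls kmul_assoc)
    have S3b: "(\<Sum>j\<in>{lo<..N}. kmul (psi j l) (\<Sum>t\<in>{1..<length ls}. frag_cmul ((-1)^t) (Pk N (mrg t ls) j))) =
        (\<Sum>t\<in>{1..<length ls}. frag_cmul ((-1)^t) (Pk N (l # mrg t ls) lo))"
    proof -
      have "(\<Sum>j\<in>{lo<..N}. kmul (psi j l) (\<Sum>t\<in>{1..<length ls}. frag_cmul ((-1)^t) (Pk N (mrg t ls) j))) =
          (\<Sum>j\<in>{lo<..N}. \<Sum>t\<in>{1..<length ls}. frag_cmul ((-1)^t) (kmul (psi j l) (Pk N (mrg t ls) j)))"
        by (simp add: kmul_sum2 kmul_cmul2)
      also have "\<dots> = (\<Sum>t\<in>{1..<length ls}. \<Sum>j\<in>{lo<..N}. frag_cmul ((-1)^t) (kmul (psi j l) (Pk N (mrg t ls) j)))"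
        by (rule sum.swap)
      also have "\<dots> = (\<Sum>t\<in>{1..<length ls}. frag_cmul ((-1)^t) (Pk N (l # mrg t ls) lo))"
        by (simp add: frag_cmul_sum)
      finally show ?thesis .
    qed
    have S3c: "(\<Sum>j\<in>{lo<..N}. kmul (psi j l) (frag_cmul ((-1)^(length ls)) (kmul (Pk N (butlast ls) j) (gg (Suc N) (last ls))))) =
        frag_cmul ((-1)^(length ls)) (kmul (Pk N (l # butlast ls) lo) (gg (Suc N) (last ls)))"
      by (simp add: kmul_cmul2 frag_cmul_sum kmul_sum1 kmul_assoc)
    have S3: "(\<Sum>j\<in>{lo<..N}. kmul (psi j l) (Dk (Pk N ls j))) =
        (\<Sum>j\<in>{lo<..N}. kmul (kmul (psi j l) (gg (Suc j) m)) (Pk N ms j))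
        + (\<Sum>t\<in>{1..<length ls}. frag_cmul ((-1)^t) (Pk N (l # mrg t ls) lo))
        + frag_cmul ((-1)^(length ls)) (kmul (Pk N (l # butlast ls) lo) (gg (Suc N) (last ls)))"
      unfolding IH Cf_def kmul_add2 sum.distrib S3a S3b S3c ..
    have S4: "(\<Sum>k\<in>{lo<..N}. kmul (kmul (gg k l) (psi k m)) (Pk N ms k)) +
        (\<Sum>j\<in>{lo<..N}. kmul (kmul (psi j l) (gg (Suc j) m)) (Pk N ms j)) = Pk N (madd l m # ms) lo"
      by (simp add: psi_split kmul_add1 sum.distrib add.commute)
    have n1: "1 \<le> length ls" using False by (cases ls) auto
    have E1: "(\<Sum>t\<in>{1..<length (l # ls)}. frag_cmul ((-1)^t) (Pk N (mrg t (l # ls)) lo)) =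
        - Pk N (madd l m # ms) lo - (\<Sum>t\<in>{1..<length ls}. frag_cmul ((-1)^t) (Pk N (l # mrg t ls) lo))"
    proof -
      have "(\<Sum>t\<in>{1..<length (l # ls)}. frag_cmul ((-1)^t) (Pk N (mrg t (l # ls)) lo)) =
          frag_cmul ((-1)^1) (Pk N (mrg 1 (l # ls)) lo) + (\<Sum>t\<in>{Suc 1..<Suc (length ls)}. frag_cmul ((-1)^t) (Pk N (mrg t (l # ls)) lo))"
        using n1 by (subst sum.atLeast_Suc_lessThan) auto
      also have "(\<Sum>t\<in>{Suc 1..<Suc (length ls)}. frag_cmul ((-1)^t) (Pk N (mrg t (l # ls)) lo)) =
          (\<Sum>t\<in>{1..<length ls}. frag_cmul ((-1)^(Suc t)) (Pk N (mrg (Suc t) (l # ls)) lo))"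
        by (rule sum.shift_bounds_Suc_ivl)
      also have "\<dots> = - (\<Sum>t\<in>{1..<length ls}. frag_cmul ((-1)^t) (Pk N (l # mrg t ls) lo))"
        by (simp add: sum_negf[symmetric] mrg_Suc del: minus_frag_cmul) (rule sum.cong, auto simp: mrg_Suc)
      finally show ?thesis by (simp add: ls mrg_1 del: minus_frag_cmul)
    qed
    have E2: "frag_cmul ((-1)^(length (l # ls))) (kmul (Pk N (butlast (l # ls)) lo) (gg (Suc N) (last (l # ls)))) =
        - frag_cmul ((-1)^(length ls)) (kmul (Pk N (l # butlast ls) lo) (gg (Suc N) (last ls)))"
      using False by (simp del: minus_frag_cmul add: minus_frag_cmul[symmetric])
    have "Dk (Pk N (l # ls) lo) = kmul (gg (Suc lo) l) (Pk N ls lo) +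
        (- Pk N (madd l m # ms) lo - (\<Sum>t\<in>{1..<length ls}. frag_cmul ((-1)^t) (Pk N (l # mrg t ls) lo))) +
        - frag_cmul ((-1)^(length ls)) (kmul (Pk N (l # butlast ls) lo) (gg (Suc N) (last ls)))"
      by (rule ab_assemble[OF _ S4]) (simp only: S1 S2 S3)
    then show ?thesis unfolding Cf_def E1 E2 by simp
  qed
qed


definition incs :: "nat \<Rightarrow> nat \<Rightarrow> nat \<Rightarrow> nat list set" where
  "incs N lo p = {js. length js = p \<and> sorted_wrt (<) js \<and> set js \<subseteq> {lo<..N}}"

lemma incs_0: "incs N lo 0 = {[]}" by (auto simp: incs_def)

lemma incs_Suc: "incs N lo (Suc p) = (\<lambda>(j,js). j # js) ` (SIGMA j:{lo<..N}. incs N j p)"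
proof (rule set_eqI)
  fix xs
  show "xs \<in> incs N lo (Suc p) \<longleftrightarrow> xs \<in> (\<lambda>(j,js). j # js) ` (SIGMA j:{lo<..N}. incs N j p)"
  proof (cases xs)
    case Nil then show ?thesis by (auto simp: incs_def)
  next
    case (Cons j js)
    have "xs \<in> incs N lo (Suc p) \<longleftrightarrow> j \<in> {lo<..N} \<and> js \<in> incs N j p"
      by (auto simp: incs_def Cons)
    then show ?thesis by (auto simp: Cons image_iff)
  qed
qed

lemma finite_incs: "finite (incs N lo p)"
proof -
  have "incs N lo p \<subseteq> {js. set js \<subseteq> {lo<..N} \<and> length js = p}" by (auto simp: incs_def)
  then show ?thesis using finite_lists_length_eq[of "{lo<..N}" p] finite_subset by auto
qed

lemma rsets_Nil: "rsets [] [] = {[]}" by (auto simp: rsets_def)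

lemma rsets_Cons:
  "rsets (l # ls) (j # js) = (\<lambda>(r,rs). r # rs) ` ({..<l j} \<times> rsets ls js)"
proof (rule set_eqI)
  fix xs
  show "xs \<in> rsets (l # ls) (j # js) \<longleftrightarrow> xs \<in> (\<lambda>(r,rs). r # rs) ` ({..<l j} \<times> rsets ls js)"
  proof (cases xs)
    case Nil then show ?thesis by (auto simp: rsets_def)
  next
    case (Cons r rs)
    have "xs \<in> rsets (l # ls) (j # js) \<longleftrightarrow> r < l j \<and> rs \<in> rsets ls js"
      by (auto simp: rsets_def Cons All_less_Suc2)
    then show ?thesis by (auto simp: Cons image_iff)
  qed
qed

lemma closed_form:
  "length ls = p \<Longrightarrow> (\<Sum>js\<in>incs N lo p. \<Sum>rs\<in>rsets ls js. frag_of (Qvec ls js rs, js, Qhat ls js rs)) = Pk N ls lo"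
proof (induction ls arbitrary: lo p)
  case Nil
  then show ?case by (simp add: incs_0 rsets_Nil Qvec_Nil Qhat_Nil unit0_def)
next
  case (Cons l ls)
  then obtain p' where p: "p = Suc p'" "length ls = p'" by auto
  have inj1: "inj_on (\<lambda>(j,js). j # js) (SIGMA j:{lo<..N}. incs N j p')" by (auto simp: inj_on_def)
  have inj2: "inj_on (\<lambda>(r,rs). r # rs) ({..<l j} \<times> rsets ls js)" for j js by (auto simp: inj_on_def)
  have tm: "frag_of (Qvec (l # ls) (j # js) (r # rs), j # js, Qhat (l # ls) (j # js) (r # rs)) =
      kmul (frag_of (lft l j r, [j], rgt l j r)) (frag_of (Qvec ls js rs, js, Qhat ls js rs))"
    if "j \<in> {lo<..N}" "js \<in> incs N j p'" "r < l j" "rs \<in> rsets ls js" for j js r rs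
  proof -
    have s: "sorted_wrt (<) (j # js)" using that by (auto simp: incs_def)
    have len: "length ls = length js" "length rs = length js" using that p by (auto simp: incs_def rsets_def)
    have R: "rfit (l # ls) (j # js) (r # rs)"
      unfolding rfit_Cons using that s len by (simp add: rfit_def rsets_def)
    show ?thesis by (simp add: Qvec_Cons[OF s len] Qhat_Cons[OF R])
  qed
  have "(\<Sum>js\<in>incs N lo p. \<Sum>rs\<in>rsets (l # ls) js. frag_of (Qvec (l # ls) js rs, js, Qhat (l # ls) js rs)) =
      (\<Sum>j\<in>{lo<..N}. \<Sum>js\<in>incs N j p'. \<Sum>rs\<in>rsets (l # ls) (j # js). frag_of (Qvec (l # ls) (j # js) rs, j # js, Qhat (l # ls) (j # js) rs))"
    unfolding p incs_Suc sum.reindex[OF inj1]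
    by (subst (2) sum.Sigma) (simp_all add: finite_incs split_def)
  also have "\<dots> = (\<Sum>j\<in>{lo<..N}. \<Sum>js\<in>incs N j p'. \<Sum>r<l j. \<Sum>rs\<in>rsets ls js.
       kmul (frag_of (lft l j r, [j], rgt l j r)) (frag_of (Qvec ls js rs, js, Qhat ls js rs)))"
  proof (intro sum.cong refl)
    fix j js assume j: "j \<in> {lo<..N}" "js \<in> incs N j p'"
    show "(\<Sum>rs\<in>rsets (l # ls) (j # js). frag_of (Qvec (l # ls) (j # js) rs, j # js, Qhat (l # ls) (j # js) rs)) =
      (\<Sum>r<l j. \<Sum>rs\<in>rsets ls js. kmul (frag_of (lft l j r, [j], rgt l j r)) (frag_of (Qvec ls js rs, js, Qhat ls js rs)))"
      unfolding rsets_Cons sum.reindex[OF inj2] sum.cartesian_product'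
      by (intro sum.cong refl) (simp add: tm[OF j])
  qed
  also have "\<dots> = (\<Sum>j\<in>{lo<..N}. kmul (psi j l) (Pk N ls j))"
  proof (rule sum.cong[OF refl])
    fix j
    have "kmul (psi j l) (Pk N ls j) = (\<Sum>js\<in>incs N j p'. \<Sum>rs\<in>rsets ls js. \<Sum>r<l j.
       kmul (frag_of (lft l j r, [j], rgt l j r)) (frag_of (Qvec ls js rs, js, Qhat ls js rs)))"
      unfolding Cons.IH[OF p(2), symmetric] psi_def
      by (simp add: kmul_sum1 kmul_sum2 finite_incs finite_rsets)
    moreover have "(\<Sum>js\<in>incs N j p'. \<Sum>r<l j. \<Sum>rs\<in>rsets ls js.
       kmul (frag_of (lft l j r, [j], rgt l j r)) (frag_of (Qvec ls js rs, js, Qhat ls js rs))) =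
       (\<Sum>js\<in>incs N j p'. \<Sum>rs\<in>rsets ls js. \<Sum>r<l j.
       kmul (frag_of (lft l j r, [j], rgt l j r)) (frag_of (Qvec ls js rs, js, Qhat ls js rs)))"
      by (intro sum.cong refl) (rule sum.swap)
    ultimately show "(\<Sum>js\<in>incs N j p'. \<Sum>r<l j. \<Sum>rs\<in>rsets ls js.
       kmul (frag_of (lft l j r, [j], rgt l j r)) (frag_of (Qvec ls js rs, js, Qhat ls js rs))) =
       kmul (psi j l) (Pk N ls j)" by simp
  qed
  finally show ?case by simp
qed

definition sh :: "ex \<Rightarrow> ex \<Rightarrow> (kb \<Rightarrow>\<^sub>0 int) \<Rightarrow> kb \<Rightarrow>\<^sub>0 int" where
  "sh a b X = kmul (frag_of (a, [], mzero)) (kmul X (frag_of (mzero, [], b)))"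

lemma sh_of: "sh a b (frag_of (c, J, d)) = frag_of (madd a c, J, madd d b)"
  by (simp add: sh_def)

lemma sh_sum: "finite I \<Longrightarrow> sh a b (\<Sum>i\<in>I. f i) = (\<Sum>i\<in>I. sh a b (f i))"
  by (simp add: sh_def kmul_sum1 kmul_sum2)

lemma incseqs_incs: "incseqs N p = incs N 0 p"
  by (auto simp: incseqs_def incs_def)

lemma Psi0_eq: "Psi0 N (a, ls, b) = sh a b (Pk N ls 0)"
proof (cases "ls = []")
  case True then show ?thesis by (simp add: Psi0_def sh_def unit0_def)
next
  case False
  have "Psi0 N (a, ls, b) = (\<Sum>js\<in>incs N 0 (length ls). \<Sum>rs\<in>rsets ls js. frag_of (madd a (Qvec ls js rs), js, madd (Qhat ls js rs) b))"
    using False by (simp add: Psi0_def incseqs_incs) (subst sum.Sigma, simp_all add: finite_incs finite_rsets split_def)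
  also have "\<dots> = sh a b (Pk N ls 0)"
    unfolding closed_form[OF refl, symmetric]
    by (simp add: sh_sum finite_incs finite_rsets sh_of)
  finally show ?thesis .
qed


lemma dK0_nil [simp]: "dK0 (c, [], d) = 0" by (simp add: dK0_def)

lemma Dk_kmul_right0: "Dk (kmul X (frag_of (c, [], d))) = kmul (Dk X) (frag_of (c, [], d))"
  using subset_UNIV
  by (induction X rule: frag_induction)
     (auto simp: dK0_kcat kmul_diff1 Dk_diff kmul_of_right[symmetric])

lemma Dk_kmul_left0: "Dk (kmul (frag_of (c, [], d)) X) = kmul (frag_of (c, [], d)) (Dk X)"
  using Dk_kmul_of[of "(c,[],d)" X] by (simp add: kdeg_def)

lemma Dk_sh: "Dk (sh a b X) = sh a b (Dk X)"
  by (simp add: sh_def Dk_kmul_left0 Dk_kmul_right0)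

lemma sh_add: "sh a b (X + Y) = sh a b X + sh a b Y" by (simp add: sh_def kmul_add1 kmul_add2)
lemma sh_cmul: "sh a b (frag_cmul c X) = frag_cmul c (sh a b X)" by (simp add: sh_def kmul_cmul1 kmul_cmul2)

lemma gg_one: "l \<in> expvecs N \<Longrightarrow> gg (Suc 0) l = frag_of (l, [], mzero)"
  unfolding gg_def by (rule arg_cong[where f=frag_of]) (auto simp: expvecs_def mzero_def fun_eq_iff)

lemma gg_top: "l \<in> expvecs N \<Longrightarrow> gg (Suc N) l = frag_of (mzero, [], l)"
  unfolding gg_def by (rule arg_cong[where f=frag_of]) (auto simp: expvecs_def mzero_def fun_eq_iff)

lemma sh_left: "sh a b (kmul (frag_of (l, [], mzero)) X) = sh (madd a l) b X"
  by (simp add: sh_def kmul_assoc[symmetric])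

lemma sh_right: "sh a b (kmul X (frag_of (mzero, [], l))) = sh a (madd l b) X"
  by (simp add: sh_def kmul_assoc)

lemma bar_of_list_snoc: "bar_of_list (x # ys @ [y]) = (x, ys, y)"
  by (simp add: bar_of_list_def)

lemma sum_atMost_split:
  fixes f :: "nat \<Rightarrow> 'a::comm_monoid_add"
  assumes "1 \<le> p"
  shows "(\<Sum>i\<le>p. f i) = f 0 + (\<Sum>i\<in>{1..<p}. f i) + f p"
proof -
  have "{..p} = insert 0 (insert p {1..<p})" using assms by auto
  then show ?thesis using assms by (simp add: add_ac)
qed

lemma dB0_split:
  assumes "ls \<noteq> []"
  shows "dB0 (a, ls, b) = frag_of (madd a (hd ls), tl ls, b)
     + (\<Sum>t\<in>{1..<length ls}. frag_cmul ((-1)^t) (frag_of (a, mrg t ls, b)))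
     + frag_cmul ((-1)^(length ls)) (frag_of (a, butlast ls, madd (last ls) b))"
proof -
  define L where "L = a # ls @ [b]"
  define f where "f i = frag_cmul ((-1) ^ i) (frag_of (bar_of_list (take i L @ [madd (L ! i) (L ! Suc i)] @ drop (Suc (Suc i)) L)))" for i
  have p1: "1 \<le> length ls" using assms by (cases ls) auto
  have "dB0 (a, ls, b) = (\<Sum>i\<le>length ls. f i)" by (simp add: dB0_def L_def f_def Let_def)
  also have "\<dots> = f 0 + (\<Sum>i\<in>{1..<length ls}. f i) + f (length ls)" by (rule sum_atMost_split[OF p1])
  also have "f 0 = frag_of (madd a (hd ls), tl ls, b)"
  proof -
    have "take 0 L @ [madd (L ! 0) (L ! Suc 0)] @ drop (Suc (Suc 0)) L = madd a (hd ls) # tl ls @ [b]"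
      using assms by (cases ls) (auto simp: L_def)
    then show ?thesis by (simp add: f_def bar_of_list_snoc)
  qed
  also have "(\<Sum>i\<in>{1..<length ls}. f i) = (\<Sum>t\<in>{1..<length ls}. frag_cmul ((-1)^t) (frag_of (a, mrg t ls, b)))"
  proof (rule sum.cong[OF refl])
    fix i assume i: "i \<in> {1..<length ls}"
    then obtain i' where i': "i = Suc i'" by (cases i) auto
    have "take i L @ [madd (L ! i) (L ! Suc i)] @ drop (Suc (Suc i)) L = a # mrg i ls @ [b]"
      using i by (simp add: L_def i' mrg_def nth_append)
    then show "f i = frag_cmul ((-1)^i) (frag_of (a, mrg i ls, b))" by (simp add: f_def bar_of_list_snoc)
  qed
  also have "f (length ls) = frag_cmul ((-1)^(length ls)) (frag_of (a, butlast ls, madd (last ls) b))"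
  proof -
    obtain n where n: "length ls = Suc n" using p1 by (cases "length ls") auto
    have "take (length ls) L @ [madd (L ! length ls) (L ! Suc (length ls))] @ drop (Suc (Suc (length ls))) L
        = a # butlast ls @ [madd (last ls) b]"
      using assms n by (simp add: L_def nth_append butlast_conv_take last_conv_nth)
    then show ?thesis by (simp add: f_def bar_of_list_snoc)
  qed
  finally show ?thesis .
qed

lemma U2:
  assumes "ls \<noteq> []" "set ls \<subseteq> expvecs N"
  shows "frag_extend dK0 (Psi0 N (a, ls, b)) = frag_extend (Psi0 N) (dB0 (a, ls, b))"
proof -
  have hd: "hd ls \<in> expvecs N" and la: "last ls \<in> expvecs N" using assms by auto
  have "frag_extend dK0 (Psi0 N (a, ls, b)) = sh a b (Cf N ls 0)"
    unfolding Dk_def[symmetric] Psi0_eq Dk_sh DP[OF assms] ..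
  also have "\<dots> = frag_extend (Psi0 N) (dB0 (a, ls, b))"
    unfolding Cf_def dB0_split[OF assms(1)]
    by (simp add: frag_extend_add frag_extend_sum frag_extend_cmul sh_add sh_cmul sh_sum Psi0_eq
        gg_one[OF hd] gg_top[OF la] sh_left sh_right comp_def)
  finally show ?thesis .
qed


section \<open>Permutation combinatorics\<close>

fun cyc :: "nat \<Rightarrow> nat \<Rightarrow> nat" where
  "cyc 0 = id"
| "cyc (Suc i) = Transposition.transpose i (Suc i) \<circ> cyc i"

lemma cyc_apply: "cyc i k = (if k = 0 then i else if k \<le> i then k - 1 else k)"
  by (induction i arbitrary: k) (auto simp: transpose_def)

lemma cyc_permutes: "cyc i permutes {0..i}"
proof (induction i)
  case 0 then show ?case by (simp add: permutes_id id_def[symmetric])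
next
  case (Suc i)
  have "cyc i permutes {0..Suc i}" by (rule permutes_subset[OF Suc]) auto
  moreover have "Transposition.transpose i (Suc i) permutes {0..Suc i}" by (rule permutes_swap_id) auto
  ultimately show ?case by (simp only: cyc.simps) (rule permutes_compose)
qed

lemma sign_cyc: "sign (cyc i) = (-1) ^ i"
proof (induction i)
  case 0 then show ?case by simp
next
  case (Suc i)
  have "permutation (cyc i)" using cyc_permutes[of i] by (meson finite_atLeastAtMost permutes_imp_permutation)
  then have "sign (cyc (Suc i)) = sign (Transposition.transpose i (Suc i)) * sign (cyc i)"
    by (simp only: cyc.simps) (rule sign_compose[OF permutation_swap_id])
  then show ?case by (simp only: Suc.IH sign_swap_id) simp
qed

definition ext :: "(nat \<Rightarrow> nat) \<Rightarrow> nat \<Rightarrow> nat" where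
  "ext \<sigma> = (\<lambda>k. if k = 0 then 0 else Suc (\<sigma> (k - 1)))"

lemma ext_perm:
  assumes "\<sigma> permutes {0..<n}"
  shows "ext \<sigma> permutes {0..<Suc n} \<and> sign (ext \<sigma>) = sign \<sigma>"
  using assms finite_atLeastLessThan
proof (induction rule: permutes_induct)
  case id
  have "ext id = id" by (auto simp: ext_def fun_eq_iff)
  then show ?case by (simp add: permutes_id id_def[symmetric])
next
  case (swap a b p)
  have e: "ext (Transposition.transpose a b \<circ> p) = Transposition.transpose (Suc a) (Suc b) \<circ> ext p"
    by (auto simp: ext_def fun_eq_iff transpose_def)
  have e1: "ext p permutes {0..<Suc n}" and e2: "sign (ext p) = sign p" using swap.IH by auto
  have pp: "permutation (ext p)" using e1 by (meson finite_atLeastLessThan permutes_imp_permutation)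
  have pp': "permutation p" using \<open>p permutes {0..<n}\<close> by (meson finite_atLeastLessThan permutes_imp_permutation)
  have T: "Transposition.transpose (Suc a) (Suc b) permutes {0..<Suc n}"
    using \<open>a \<in> {0..<n}\<close> \<open>b \<in> {0..<n}\<close> by (intro permutes_swap_id) auto
  have s1: "sign (Transposition.transpose (Suc a) (Suc b) \<circ> ext p) = - sign p"
    using sign_compose[OF permutation_swap_id pp, of "Suc a" "Suc b"] \<open>a \<noteq> b\<close> e2 by (simp add: sign_swap_id)
  have s2: "sign (Transposition.transpose a b \<circ> p) = - sign p"
    using sign_compose[OF permutation_swap_id pp', of a b] \<open>a \<noteq> b\<close> by (simp add: sign_swap_id)
  show ?case unfolding e s1 s2 using permutes_compose[OF e1 T] by (simp only: simp_thms)
qed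

definition shf :: "nat \<Rightarrow> nat \<Rightarrow> nat" where "shf i m = (if m < i then m else Suc m)"

definition piof :: "nat \<Rightarrow> (nat \<Rightarrow> nat) \<Rightarrow> nat \<Rightarrow> nat" where
  "piof i \<sigma> = cyc i \<circ> ext \<sigma>"

lemma piof_0 [simp]: "piof i \<sigma> 0 = i"
  by (simp add: piof_def ext_def cyc_apply)

lemma piof_Suc [simp]: "piof i \<sigma> (Suc k) = shf i (\<sigma> k)"
  by (simp add: piof_def ext_def cyc_apply shf_def)

lemma piof_perm:
  assumes "i < Suc n" "\<sigma> permutes {0..<n}"
  shows "piof i \<sigma> permutes {0..<Suc n} \<and> sign (piof i \<sigma>) = (-1)^i * sign \<sigma>"
proof -
  have c: "cyc i permutes {0..<Suc n}" by (rule permutes_subset[OF cyc_permutes]) (use assms in auto)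
  have e: "ext \<sigma> permutes {0..<Suc n}" "sign (ext \<sigma>) = sign \<sigma>" using ext_perm[OF assms(2)] by auto
  have "permutation (cyc i)" "permutation (ext \<sigma>)"
    using c e(1) by (auto intro: permutes_imp_permutation)
  then show ?thesis using c e by (simp add: piof_def permutes_compose sign_compose sign_cyc)
qed

lemma bij_from_card:
  assumes "inj_on f A" "f ` A \<subseteq> B" "finite B" "card A = card B"
  shows "bij_betw f A B"
proof -
  have "card (f ` A) = card B" using assms(1,4) by (simp add: card_image)
  then have "f ` A = B" using assms(2,3) by (simp add: card_subset_eq)
  then show ?thesis using assms(1) by (simp add: bij_betw_def)
qed

lemma piof_bij:
  "bij_betw (\<lambda>(i,\<sigma>). piof i \<sigma>) ({..<Suc n} \<times> {\<sigma>. \<sigma> permutes {0..<n}}) {\<pi>. \<pi> permutes {0..<Suc n}}"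
proof (rule bij_from_card)
  show "inj_on (\<lambda>(i,\<sigma>). piof i \<sigma>) ({..<Suc n} \<times> {\<sigma>. \<sigma> permutes {0..<n}})"
  proof (rule inj_onI, clarify)
    fix i \<sigma> i' \<sigma>' assume eq: "piof i \<sigma> = piof i' \<sigma>'"
    have ii: "i = i'" using fun_cong[OF eq, of 0] by simp
    have "\<sigma> k = \<sigma>' k" for k
      using fun_cong[OF eq, of "Suc k"] ii by (auto simp: shf_def split: if_splits)
    then show "i = i' \<and> \<sigma> = \<sigma>'" using ii by auto
  qed
  show "(\<lambda>(i,\<sigma>). piof i \<sigma>) ` ({..<Suc n} \<times> {\<sigma>. \<sigma> permutes {0..<n}}) \<subseteq> {\<pi>. \<pi> permutes {0..<Suc n}}"
    using piof_perm by auto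
  show "finite {\<pi>. \<pi> permutes {0..<Suc n}}" by (simp add: finite_permutations)
  show "card ({..<Suc n} \<times> {\<sigma>. \<sigma> permutes {0..<n}}) = card {\<pi>. \<pi> permutes {0..<Suc n}}"
    by (simp add: card_cartesian_product card_permutations)
qed

lemma perm_B0:
  "(\<Sum>\<pi>\<in>{\<pi>. \<pi> permutes {0..<Suc n}}. frag_cmul (sign \<pi>) (G (\<pi> 0) (map (\<lambda>k. \<pi> (Suc k)) [0..<n]))) =
   (\<Sum>i<Suc n. frag_cmul ((-1)^i) (\<Sum>\<sigma>\<in>{\<sigma>. \<sigma> permutes {0..<n}}. frag_cmul (sign \<sigma>) (G i (map (\<lambda>k. shf i (\<sigma> k)) [0..<n]))))"
proof -
  have "(\<Sum>\<pi>\<in>{\<pi>. \<pi> permutes {0..<Suc n}}. frag_cmul (sign \<pi>) (G (\<pi> 0) (map (\<lambda>k. \<pi> (Suc k)) [0..<n]))) =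
    (\<Sum>x\<in>{..<Suc n} \<times> {\<sigma>. \<sigma> permutes {0..<n}}. frag_cmul (sign (piof (fst x) (snd x)))
        (G (piof (fst x) (snd x) 0) (map (\<lambda>k. piof (fst x) (snd x) (Suc k)) [0..<n])))"
    by (subst sum.reindex_bij_betw[OF piof_bij, symmetric]) (simp add: split_def)
  also have "\<dots> = (\<Sum>x\<in>{..<Suc n} \<times> {\<sigma>. \<sigma> permutes {0..<n}}. frag_cmul ((-1)^(fst x) * sign (snd x))
        (G (fst x) (map (\<lambda>k. shf (fst x) (snd x k)) [0..<n])))"
    by (rule sum.cong[OF refl]) (auto simp: piof_perm)
  also have "\<dots> = (\<Sum>i<Suc n. frag_cmul ((-1)^i) (\<Sum>\<sigma>\<in>{\<sigma>. \<sigma> permutes {0..<n}}. frag_cmul (sign \<sigma>) (G i (map (\<lambda>k. shf i (\<sigma> k)) [0..<n]))))"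
    by (simp add: sum.cartesian_product' frag_cmul_sum)
  finally show ?thesis .
qed

lemma perm_Bp:
  "(\<Sum>\<pi>\<in>{\<pi>. \<pi> permutes {0..<Suc n}}. frag_cmul (sign \<pi>) (G (\<pi> n) (map \<pi> [0..<n]))) =
   frag_cmul ((-1)^n) (\<Sum>i<Suc n. frag_cmul ((-1)^i) (\<Sum>\<sigma>\<in>{\<sigma>. \<sigma> permutes {0..<n}}. frag_cmul (sign \<sigma>) (G i (map (\<lambda>k. shf i (\<sigma> k)) [0..<n]))))"
proof -
  define c where "c = cyc n"
  have cp: "c permutes {0..<Suc n}" unfolding c_def by (rule permutes_subset[OF cyc_permutes]) auto
  have cperm: "permutation c" using cp by (auto intro: permutes_imp_permutation)
  have "(\<Sum>\<pi>\<in>{\<pi>. \<pi> permutes {0..<Suc n}}. frag_cmul (sign \<pi>) (G (\<pi> 0) (map (\<lambda>k. \<pi> (Suc k)) [0..<n]))) =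
        (\<Sum>\<pi>\<in>{\<pi>. \<pi> permutes {0..<Suc n}}. frag_cmul (sign (\<pi> \<circ> c)) (G ((\<pi> \<circ> c) 0) (map (\<lambda>k. (\<pi> \<circ> c) (Suc k)) [0..<n])))"
    by (rule sum_permutations_compose_right[OF cp])
  also have "\<dots> = frag_cmul ((-1)^n) (\<Sum>\<pi>\<in>{\<pi>. \<pi> permutes {0..<Suc n}}. frag_cmul (sign \<pi>) (G (\<pi> n) (map \<pi> [0..<n])))"
  proof -
    have "\<And>\<pi>. \<pi> permutes {0..<Suc n} \<Longrightarrow> frag_cmul (sign (\<pi> \<circ> c)) (G ((\<pi> \<circ> c) 0) (map (\<lambda>k. (\<pi> \<circ> c) (Suc k)) [0..<n]))
        = frag_cmul ((-1)^n) (frag_cmul (sign \<pi>) (G (\<pi> n) (map \<pi> [0..<n])))"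
    proof -
      fix \<pi> assume p: "\<pi> permutes {0..<Suc n}"
      have "permutation \<pi>" using p by (auto intro: permutes_imp_permutation)
      then have s: "sign (\<pi> \<circ> c) = sign \<pi> * (-1)^n" using cperm by (simp add: sign_compose c_def sign_cyc)
      have m: "map (\<lambda>k. (\<pi> \<circ> c) (Suc k)) [0..<n] = map \<pi> [0..<n]"
        by (auto simp: c_def cyc_apply)
      show "frag_cmul (sign (\<pi> \<circ> c)) (G ((\<pi> \<circ> c) 0) (map (\<lambda>k. (\<pi> \<circ> c) (Suc k)) [0..<n]))
        = frag_cmul ((-1)^n) (frag_cmul (sign \<pi>) (G (\<pi> n) (map \<pi> [0..<n])))"
        unfolding s m by (simp add: c_def cyc_apply mult.commute)
    qed
    then show ?thesis by (simp add: frag_cmul_sum)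
  qed
  finally have "(\<Sum>\<pi>\<in>{\<pi>. \<pi> permutes {0..<Suc n}}. frag_cmul (sign \<pi>) (G (\<pi> 0) (map (\<lambda>k. \<pi> (Suc k)) [0..<n]))) =
      frag_cmul ((-1)^n) (\<Sum>\<pi>\<in>{\<pi>. \<pi> permutes {0..<Suc n}}. frag_cmul (sign \<pi>) (G (\<pi> n) (map \<pi> [0..<n])))" .
  then have "frag_cmul ((-1)^n) (\<Sum>\<pi>\<in>{\<pi>. \<pi> permutes {0..<Suc n}}. frag_cmul (sign \<pi>) (G (\<pi> 0) (map (\<lambda>k. \<pi> (Suc k)) [0..<n]))) =
      (\<Sum>\<pi>\<in>{\<pi>. \<pi> permutes {0..<Suc n}}. frag_cmul (sign \<pi>) (G (\<pi> n) (map \<pi> [0..<n])))"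
    by (simp add: power_mult_distrib[symmetric])
  then show ?thesis unfolding perm_B0 by simp
qed


section \<open>U1: Phi is a chain map (untwisted)\<close>

lemma pw_map: "pw js \<pi> = map (\<lambda>k. unitv (js ! \<pi> k)) [0..<length js]"
  by (simp add: pw_def)

lemma mrg_map:
  assumes "1 \<le> t" "t < p"
  shows "mrg t (map f [0..<p]) = map f [0..<t - 1] @ [madd (f (t - 1)) (f t)] @ map f [Suc t..<p]"
  using assms by (simp add: mrg_def take_map drop_map)

lemma frag_self_neg: "(S :: 'a \<Rightarrow>\<^sub>0 int) = - S \<Longrightarrow> S = 0"
  by (rule poly_mapping_eqI) (metis add.inverse_inverse lookup_uminus lookup_zero neg_equal_zero)

lemma interior_zero:
  assumes "1 \<le> t" "t < length js"
  shows "(\<Sum>\<pi>\<in>{\<pi>. \<pi> permutes {0..<length js}}. frag_cmul (sign \<pi>) (frag_of (a, mrg t (pw js \<pi>), b))) = 0"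
proof -
  define p where "p = length js"
  define \<tau> where "\<tau> = Transposition.transpose (t - 1) t"
  have tp: "\<tau> permutes {0..<p}" using assms by (auto simp: \<tau>_def p_def intro!: permutes_swap_id)
  have tperm: "permutation \<tau>" using tp by (auto intro: permutes_imp_permutation)
  define F where "F \<pi> = frag_cmul (sign \<pi>) (frag_of (a, mrg t (pw js \<pi>), b))" for \<pi>
  have neg: "F (\<pi> \<circ> \<tau>) = - F \<pi>" if "\<pi> permutes {0..<p}" for \<pi>
  proof -
    have "permutation \<pi>" using that by (auto intro: permutes_imp_permutation)
    then have s: "sign (\<pi> \<circ> \<tau>) = - sign \<pi>"
      using sign_compose[OF _ tperm, of \<pi>] assms unfolding \<tau>_def by (simp add: sign_swap_id)
    have m: "mrg t (pw js (\<pi> \<circ> \<tau>)) = mrg t (pw js \<pi>)"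
      using assms unfolding pw_map p_def[symmetric] mrg_map[OF assms(1) assms(2)[folded p_def]]
      by (auto simp: \<tau>_def transpose_def madd_commute)
    show ?thesis unfolding F_def s m by simp
  qed
  have "(\<Sum>\<pi>\<in>{\<pi>. \<pi> permutes {0..<p}}. F \<pi>) = (\<Sum>\<pi>\<in>{\<pi>. \<pi> permutes {0..<p}}. F (\<pi> \<circ> \<tau>))"
    by (rule sum_permutations_compose_right[OF tp])
  also have "\<dots> = - (\<Sum>\<pi>\<in>{\<pi>. \<pi> permutes {0..<p}}. F \<pi>)"
    by (simp add: neg sum_negf)
  finally show ?thesis using frag_self_neg by (simp add: F_def p_def)
qed

lemma del_at_nth_shf:
  assumes "m < length js - 1" "i < length js"
  shows "del_at i js ! m = js ! shf i m"
  using assms by (auto simp: del_at_def shf_def nth_append min_def)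

lemma Phi0_del:
  assumes "i < Suc n" "length js = Suc n"
  shows "Phi0 (c, del_at i js, d) = (\<Sum>\<sigma>\<in>{\<sigma>. \<sigma> permutes {0..<n}}. frag_cmul (sign \<sigma>)
           (frag_of (c, map (\<lambda>k. unitv (js ! (shf i (\<sigma> k)))) [0..<n], d)))"
proof -
  have l: "length (del_at i js) = n" using assms by (simp add: del_at_def)
  show ?thesis unfolding Phi0_def prod.case l
  proof (intro sum.cong refl arg_cong[where f="frag_cmul _"] arg_cong[where f=frag_of])
    fix \<sigma> assume "\<sigma> \<in> {\<sigma>. \<sigma> permutes {0..<n}}"
    then have "\<And>k. k < n \<Longrightarrow> \<sigma> k < n" by (auto dest: permutes_in_image)
    then show "(c, pw (del_at i js) \<sigma>, d) = (c, map (\<lambda>k. unitv (js ! shf i (\<sigma> k))) [0..<n], d)"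
      using assms by (auto simp: pw_def l del_at_nth_shf)
  qed
qed

lemma U1:
  assumes "length js = Suc n"
  shows "frag_extend dB0 (Phi0 (a, js, b)) = frag_extend Phi0 (dK0 (a, js, b))"
proof -
  define P where "P = {\<pi>. \<pi> permutes {0..<Suc n}}"
  have ne: "pw js \<pi> \<noteq> []" for \<pi> using assms by (simp add: pw_def)
  have hd: "hd (pw js \<pi>) = unitv (js ! \<pi> 0)" for \<pi> using assms by (simp add: pw_def upt_conv_Cons del: upt_Suc)
  have tl: "tl (pw js \<pi>) = map (\<lambda>k. unitv (js ! \<pi> (Suc k))) [0..<n]" for \<pi>
    using assms by (simp add: pw_def upt_conv_Cons map_Suc_upt[symmetric] del: upt_Suc)
  have bl: "butlast (pw js \<pi>) = map (\<lambda>k. unitv (js ! \<pi> k)) [0..<n]" for \<pi> using assms by (simp add: pw_def)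
  have la: "last (pw js \<pi>) = unitv (js ! \<pi> n)" for \<pi> using assms by (simp add: pw_def)
  have lw: "length (pw js \<pi>) = Suc n" for \<pi> using assms by (simp add: pw_def)
  have "frag_extend dB0 (Phi0 (a, js, b)) = (\<Sum>\<pi>\<in>P. frag_cmul (sign \<pi>) (dB0 (a, pw js \<pi>, b)))"
    by (simp add: Phi0_def P_def assms frag_extend_sum frag_extend_cmul comp_def finite_permutations)
  also have "\<dots> = (\<Sum>\<pi>\<in>P. frag_cmul (sign \<pi>) (frag_of (madd a (unitv (js ! \<pi> 0)), map (\<lambda>k. unitv (js ! \<pi> (Suc k))) [0..<n], b)))
      + (\<Sum>\<pi>\<in>P. frag_cmul (sign \<pi>) (\<Sum>t\<in>{1..<Suc n}. frag_cmul ((-1)^t) (frag_of (a, mrg t (pw js \<pi>), b))))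
      + (\<Sum>\<pi>\<in>P. frag_cmul (sign \<pi>) (frag_cmul ((-1)^(Suc n)) (frag_of (a, map (\<lambda>k. unitv (js ! \<pi> k)) [0..<n], madd (unitv (js ! \<pi> n)) b))))"
    unfolding dB0_split[OF ne] hd tl bl la lw frag_cmul_distrib2 sum.distrib ..
  also have "(\<Sum>\<pi>\<in>P. frag_cmul (sign \<pi>) (\<Sum>t\<in>{1..<Suc n}. frag_cmul ((-1)^t) (frag_of (a, mrg t (pw js \<pi>), b)))) = 0"
  proof -
    have "(\<Sum>\<pi>\<in>P. frag_cmul (sign \<pi>) (\<Sum>t\<in>{1..<Suc n}. frag_cmul ((-1)^t) (frag_of (a, mrg t (pw js \<pi>), b)))) =
        (\<Sum>\<pi>\<in>P. \<Sum>t\<in>{1..<Suc n}. frag_cmul ((-1)^t) (frag_cmul (sign \<pi>) (frag_of (a, mrg t (pw js \<pi>), b))))"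
      unfolding frag_cmul_sum by (intro sum.cong refl) (simp add: mult.commute)
    also have "\<dots> = (\<Sum>t\<in>{1..<Suc n}. \<Sum>\<pi>\<in>P. frag_cmul ((-1)^t) (frag_cmul (sign \<pi>) (frag_of (a, mrg t (pw js \<pi>), b))))"
      by (rule sum.swap)
    also have "\<dots> = (\<Sum>t\<in>{1..<Suc n}. frag_cmul ((-1)^t) (\<Sum>\<pi>\<in>P. frag_cmul (sign \<pi>) (frag_of (a, mrg t (pw js \<pi>), b))))"
      by (simp only: frag_cmul_sum)
    also have "\<dots> = 0"
      by (rule sum.neutral) (use interior_zero[where js=js] assms in \<open>auto simp: P_def\<close>)
    finally show ?thesis .
  qed
  also have "(\<Sum>\<pi>\<in>P. frag_cmul (sign \<pi>) (frag_cmul ((-1)^(Suc n)) (frag_of (a, map (\<lambda>k. unitv (js ! \<pi> k)) [0..<n], madd (unitv (js ! \<pi> n)) b))))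
     = frag_cmul ((-1)^(Suc n)) (\<Sum>\<pi>\<in>P. frag_cmul (sign \<pi>) (frag_of (a, map (\<lambda>k. unitv (js ! \<pi> k)) [0..<n], madd (unitv (js ! \<pi> n)) b)))"
    unfolding frag_cmul_sum by (intro sum.cong refl) (simp add: mult.commute)
  also have "(\<Sum>\<pi>\<in>P. frag_cmul (sign \<pi>) (frag_of (madd a (unitv (js ! \<pi> 0)), map (\<lambda>k. unitv (js ! \<pi> (Suc k))) [0..<n], b)))
      = (\<Sum>i<Suc n. frag_cmul ((-1)^i) (Phi0 (madd a (unitv (js ! i)), del_at i js, b)))"
    using perm_B0[of "\<lambda>i ks. frag_of (madd a (unitv (js ! i)), map (\<lambda>k. unitv (js ! k)) ks, b)" n]
    by (simp add: P_def Phi0_del assms comp_def)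
  also have "frag_cmul ((-1)^(Suc n)) (\<Sum>\<pi>\<in>P. frag_cmul (sign \<pi>) (frag_of (a, map (\<lambda>k. unitv (js ! \<pi> k)) [0..<n], madd (unitv (js ! \<pi> n)) b)))
      = - (\<Sum>i<Suc n. frag_cmul ((-1)^i) (Phi0 (a, del_at i js, madd (unitv (js ! i)) b)))"
    using perm_Bp[of "\<lambda>i ks. frag_of (a, map (\<lambda>k. unitv (js ! k)) ks, madd (unitv (js ! i)) b)" n]
    by (simp add: P_def Phi0_del assms comp_def)
  also have "(\<Sum>i<Suc n. frag_cmul ((-1)^i) (Phi0 (madd a (unitv (js ! i)), del_at i js, b))) + 0
      + - (\<Sum>i<Suc n. frag_cmul ((-1)^i) (Phi0 (a, del_at i js, madd (unitv (js ! i)) b)))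
      = frag_extend Phi0 (dK0 (a, js, b))"
    unfolding dK0_def prod.case assms frag_extend_sum[OF finite_lessThan] comp_def frag_extend_cmul
      frag_extend_diff frag_extend_of frag_cmul_diff2 sum_subtractf
    by simp
  finally show ?thesis .
qed


lemma psi_unitv: "psi j (unitv u) = (if j = u then frag_of (mzero, [u], mzero) else 0)"
proof (cases "j = u")
  case True
  have "lft (unitv u) u 0 = mzero" "rgt (unitv u) u 0 = mzero"
    by (auto simp: lft_def rgt_def unitv_def mzero_def fun_eq_iff)
  then show ?thesis using True by (simp add: psi_def unitv_def)
next
  case False then show ?thesis by (simp add: psi_def unitv_def)
qed

lemma Pk_units:
  "Pk N (map unitv us) lo = (if sorted_wrt (<) us \<and> set us \<subseteq> {lo<..N} then frag_of (mzero, us, mzero) else 0)"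
proof (induction us arbitrary: lo)
  case Nil then show ?case by (simp add: unit0_def)
next
  case (Cons u us)
  have "Pk N (map unitv (u # us)) lo = (\<Sum>j\<in>{lo<..N}. if j = u then kmul (frag_of (mzero, [u], mzero)) (Pk N (map unitv us) j) else 0)"
    by (simp only: list.map Pk.simps) (intro sum.cong refl, simp add: psi_unitv)
  also have "\<dots> = (if u \<in> {lo<..N} then kmul (frag_of (mzero, [u], mzero)) (Pk N (map unitv us) u) else 0)"
    by (simp add: sum.delta')
  also have "\<dots> = (if sorted_wrt (<) (u # us) \<and> set (u # us) \<subseteq> {lo<..N} then frag_of (mzero, u # us, mzero) else 0)"
    unfolding Cons.IH by (auto simp: subset_iff)
  finally show ?case .
qed

lemma perm_sorted_id:
  fixes js :: "nat list"
  assumes "sorted_wrt (<) js" "\<pi> permutes {0..<length js}" "sorted_wrt (<) (map (\<lambda>k. js ! \<pi> k) [0..<length js])"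
  shows "\<pi> = id"
proof -
  define p where "p = length js"
  have d: "distinct js" "sorted js" using assms(1) by (auto simp: strict_sorted_iff)
  have d2: "distinct (map (\<lambda>k. js ! \<pi> k) [0..<p])" "sorted (map (\<lambda>k. js ! \<pi> k) [0..<p])"
    using assms(3) by (auto simp: strict_sorted_iff p_def)
  have "set (map (\<lambda>k. js ! \<pi> k) [0..<p]) = (\<lambda>k. js ! k) ` (\<pi> ` {0..<p})" by auto
  also have "\<pi> ` {0..<p} = {0..<p}" using assms(2) by (simp add: permutes_image p_def)
  also have "(\<lambda>k. js ! k) ` {0..<p} = set js" by (auto simp: p_def in_set_conv_nth)
  finally have "map (\<lambda>k. js ! \<pi> k) [0..<p] = js"
    using sorted_distinct_set_unique[OF d2(2) d2(1) d(2) d(1)] by simp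
  then have e: "\<And>k. k < p \<Longrightarrow> js ! \<pi> k = js ! k"
    by (metis (no_types, lifting) add_0 diff_zero nth_map_upt p_def length_map length_upt)
  show ?thesis
  proof
    fix k show "\<pi> k = id k"
    proof (cases "k < p")
      case True
      have "\<pi> k < p" using True assms(2) by (auto simp: p_def dest: permutes_in_image)
      then show ?thesis using e[OF True] True d(1) by (simp add: nth_eq_iff_index_eq p_def)
    next
      case False then show ?thesis using assms(2) by (simp add: permutes_not_in p_def)
    qed
  qed
qed

lemma U3:
  assumes "sorted_wrt (<) js" "set js \<subseteq> {1..N}"
  shows "frag_extend (Psi0 N) (Phi0 (a, js, b)) = frag_of (a, js, b)"
proof -
  define P where "P = {\<pi>. \<pi> permutes {0..<length js}}"
  have tm: "frag_cmul (sign \<pi>) (Psi0 N (a, pw js \<pi>, b)) = (if \<pi> = id then frag_of (a, js, b) else 0)"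
    if "\<pi> \<in> P" for \<pi>
  proof -
    have pw: "pw js \<pi> = map unitv (map (\<lambda>k. js ! \<pi> k) [0..<length js])" by (simp add: pw_def)
    show ?thesis
    proof (cases "\<pi> = id")
      case True
      have pwid: "pw js id = map unitv js" by (rule nth_equalityI) (simp_all add: pw_def)
      have "set js \<subseteq> {0<..N}" using assms(2) by auto
      then show ?thesis using True assms(1)
        by (simp add: Psi0_eq pwid Pk_units sh_of)
    next
      case False
      then have "\<not> sorted_wrt (<) (map (\<lambda>k. js ! \<pi> k) [0..<length js])"
        using perm_sorted_id[OF assms(1)] that by (auto simp: P_def)
      then show ?thesis using False by (simp only: Psi0_eq pw Pk_units) (simp add: sh_def)
    qed
  qed
  have "frag_extend (Psi0 N) (Phi0 (a, js, b)) = (\<Sum>\<pi>\<in>P. frag_cmul (sign \<pi>) (Psi0 N (a, pw js \<pi>, b)))"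
    by (simp add: Phi0_def P_def frag_extend_sum frag_extend_cmul comp_def finite_permutations)
  also have "\<dots> = (\<Sum>\<pi>\<in>P. if \<pi> = id then frag_of (a, js, b) else 0)"
    by (rule sum.cong[OF refl]) (rule tm)
  also have "\<dots> = frag_of (a, js, b)"
    by (simp add: sum.delta P_def permutes_id finite_permutations)
  finally show ?thesis .
qed

lemma unitv_expvecs: "u \<in> {1..N} \<Longrightarrow> unitv u \<in> expvecs N"
  by (auto simp: unitv_def expvecs_def)

lemma unitv_nz: "unitv u \<noteq> mzero"
  by (metis mzero_def one_neq_zero unitv_def)

lemma keys_Phi0:
  assumes "(a, js, b) \<in> Kbasis N p"
  shows "Poly_Mapping.keys (Phi0 (a, js, b)) \<subseteq> Bbasis N p"
proof -
  have A: "a \<in> expvecs N" "b \<in> expvecs N" "length js = p" "set js \<subseteq> {1..N}"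
    using assms by (auto simp: Kbasis_def)
  have "Poly_Mapping.keys (Phi0 (a, js, b)) \<subseteq> (\<Union>\<pi>\<in>{\<pi>. \<pi> permutes {0..<length js}}. Poly_Mapping.keys (frag_cmul (sign \<pi>) (frag_of (a, pw js \<pi>, b))))"
    unfolding Phi0_def prod.case by (rule keys_sum)
  also have "\<dots> \<subseteq> (\<Union>\<pi>\<in>{\<pi>. \<pi> permutes {0..<length js}}. {(a, pw js \<pi>, b)})"
    by (intro UN_mono order_refl) (metis keys_cmul keys_frag_of)
  also have "\<dots> \<subseteq> Bbasis N p"
  proof (rule UN_least)
    fix \<pi> assume "\<pi> \<in> {\<pi>. \<pi> permutes {0..<length js}}"
    then have p: "\<pi> permutes {0..<length js}" by simp
    have all: "\<forall>l\<in>set (pw js \<pi>). l \<in> expvecs N \<and> l \<noteq> mzero"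
    proof
      fix l assume "l \<in> set (pw js \<pi>)"
      then obtain k where k: "k < length js" "l = unitv (js ! \<pi> k)" by (auto simp: pw_def)
      have "\<pi> k < length js" using k(1) p by (auto dest: permutes_in_image)
      then have "js ! \<pi> k \<in> {1..N}" using A(4) nth_mem by blast
      then show "l \<in> expvecs N \<and> l \<noteq> mzero" using k by (simp add: unitv_expvecs unitv_nz)
    qed
    have len: "length (pw js \<pi>) = p" using A(3) by (simp add: pw_def)
    show "{(a, pw js \<pi>, b)} \<subseteq> Bbasis N p" unfolding Bbasis_def using A(1,2) len all by blast
  qed
  finally show ?thesis .
qed

lemma keys_kmul: "Poly_Mapping.keys (kmul u v) \<subseteq> {kcat x y | x y. x \<in> Poly_Mapping.keys u \<and> y \<in> Poly_Mapping.keys v}"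
proof
  fix z assume z: "z \<in> Poly_Mapping.keys (kmul u v)"
  have "z \<in> (\<Union>x\<in>Poly_Mapping.keys u. Poly_Mapping.keys (frag_extend (\<lambda>y. frag_of (kcat x y)) v))"
    using subsetD[OF keys_frag_extend z[unfolded kmul_def]] .
  then obtain x where x: "x \<in> Poly_Mapping.keys u" "z \<in> Poly_Mapping.keys (frag_extend (\<lambda>y. frag_of (kcat x y)) v)"
    by (rule UN_E)
  have "z \<in> (\<Union>y\<in>Poly_Mapping.keys v. Poly_Mapping.keys (frag_of (kcat x y)))"
    using subsetD[OF keys_frag_extend x(2)] .
  then obtain y where y: "y \<in> Poly_Mapping.keys v" "z \<in> Poly_Mapping.keys (frag_of (kcat x y))"
    by (rule UN_E)
  have "z = kcat x y" using y(2) by simp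
  then show "z \<in> {kcat x y | x y. x \<in> Poly_Mapping.keys u \<and> y \<in> Poly_Mapping.keys v}" using x(1) y(1) by blast
qed

lemma madd_expvecs: "a \<in> expvecs N \<Longrightarrow> b \<in> expvecs N \<Longrightarrow> madd a b \<in> expvecs N"
  by (auto simp: expvecs_def madd_def)

lemma mzero_expvecs: "mzero \<in> expvecs N" by (simp add: expvecs_def mzero_def)

lemma lft_expvecs:
  assumes l: "l \<in> expvecs N" and j: "j \<in> {1..N}"
  shows "lft l j r \<in> expvecs N"
  unfolding expvecs_def mem_Collect_eq
proof (intro allI impI)
  fix k assume k: "k \<notin> {1..N}"
  then have "k \<noteq> j" using j by blast
  moreover have "l k = 0" using l k by (simp add: expvecs_def)
  ultimately show "lft l j r k = 0" by (simp add: lft_def)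
qed

lemma rgt_expvecs:
  assumes l: "l \<in> expvecs N" and j: "j \<in> {1..N}"
  shows "rgt l j r \<in> expvecs N"
  unfolding expvecs_def mem_Collect_eq
proof (intro allI impI)
  fix k assume k: "k \<notin> {1..N}"
  then have "k \<noteq> j" using j by blast
  moreover have "l k = 0" using l k by (simp add: expvecs_def)
  ultimately show "rgt l j r k = 0" by (simp add: rgt_def)
qed

definition kgood :: "nat \<Rightarrow> nat \<Rightarrow> nat \<Rightarrow> kb set" where
  "kgood N lo p = {(c, J, d). c \<in> expvecs N \<and> d \<in> expvecs N \<and> length J = p \<and> sorted_wrt (<) J \<and> set J \<subseteq> {lo<..N}}"

lemma keys_psi_elem:
  assumes "y \<in> Poly_Mapping.keys (psi j l)"
  obtains r where "y = (lft l j r, [j], rgt l j r)"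
proof -
  have "y \<in> (\<Union>r\<in>{..<l j}. Poly_Mapping.keys (frag_of (lft l j r, [j], rgt l j r)))"
    using subsetD[OF keys_sum assms[unfolded psi_def]] .
  then obtain r where "y \<in> Poly_Mapping.keys (frag_of (lft l j r, [j], rgt l j r))"
    by (rule UN_E)
  then show ?thesis using that by simp
qed

lemma keys_Pk:
  "set ls \<subseteq> expvecs N \<Longrightarrow> Poly_Mapping.keys (Pk N ls lo) \<subseteq> kgood N lo (length ls)"
proof (induction ls arbitrary: lo)
  case Nil then show ?case by (simp add: unit0_def kgood_def mzero_expvecs)
next
  case (Cons l ls)
  have lE: "l \<in> expvecs N" using Cons.prems by simp
  show ?case
  proof
    fix x assume "x \<in> Poly_Mapping.keys (Pk N (l # ls) lo)"
    then obtain j where j: "j \<in> {lo<..N}" "x \<in> Poly_Mapping.keys (kmul (psi j l) (Pk N ls j))"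
      using keys_sum[of "\<lambda>j. kmul (psi j l) (Pk N ls j)" "{lo<..N}"] by auto
    then obtain y z where yz: "x = kcat y z" "y \<in> Poly_Mapping.keys (psi j l)" "z \<in> Poly_Mapping.keys (Pk N ls j)"
      using keys_kmul by blast
    obtain r where y: "y = (lft l j r, [j], rgt l j r)" using keys_psi_elem[OF yz(2)] .
    have z: "z \<in> kgood N j (length ls)" using Cons.IH Cons.prems yz(3) by auto
    obtain c J d where zz: "z = (c, J, d)" by (cases z) auto
    have jr: "j \<in> {1..N}" using j by auto
    have "lft l j r \<in> expvecs N" "rgt l j r \<in> expvecs N"
      using lft_expvecs[OF lE jr] rgt_expvecs[OF lE jr] .
    then show "x \<in> kgood N lo (length (l # ls))"
      using z j unfolding yz(1) y zz kgood_def by (auto simp: madd_expvecs)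
  qed
qed

lemma keys_Psi0:
  assumes "(a, ls, b) \<in> Bbasis N p"
  shows "Poly_Mapping.keys (Psi0 N (a, ls, b)) \<subseteq> Kbasis N p"
proof
  have ls: "set ls \<subseteq> expvecs N" "length ls = p" "a \<in> expvecs N" "b \<in> expvecs N"
    using assms by (auto simp: Bbasis_def)
  fix x assume "x \<in> Poly_Mapping.keys (Psi0 N (a, ls, b))"
  then obtain y z where yz: "x = kcat y z" "y \<in> Poly_Mapping.keys (frag_of (a, [], mzero))"
      "z \<in> Poly_Mapping.keys (kmul (Pk N ls 0) (frag_of (mzero, [], b)))"
    unfolding Psi0_eq sh_def using keys_kmul by blast
  obtain u w where uw: "z = kcat u w" "u \<in> Poly_Mapping.keys (Pk N ls 0)" "w \<in> Poly_Mapping.keys (frag_of (mzero, [], b))"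
    using yz(3) keys_kmul by blast
  have u: "u \<in> kgood N 0 p" using keys_Pk[OF ls(1)] uw(2) ls(2) by auto
  obtain c J d where uu: "u = (c, J, d)" by (cases u) auto
  have "y = (a, [], mzero)" "w = (mzero, [], b)" using yz(2) uw(3) by auto
  then show "x \<in> Kbasis N p"
    using u ls unfolding yz(1) uw(1) uu kgood_def Kbasis_def by (auto simp: madd_expvecs)
qed


lemma vecs_lin_ext_tw:
  assumes "vecs S v" "\<And>x. x \<in> S \<Longrightarrow> K x = tw t1 t2 x (F x)" "\<And>x. x \<in> S \<Longrightarrow> Poly_Mapping.keys (F x) \<subseteq> T"
  shows "vecs T (lin_ext K v)"
proof -
  have fs: "finite (supp v)" "supp v \<subseteq> S" using assms(1) by (auto simp: vecs_def)
  have "supp (lin_ext K v) \<subseteq> (\<Union>x\<in>supp v. supp (K x))" by (rule supp_lin_ext)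
  also have "\<dots> \<subseteq> (\<Union>x\<in>supp v. Poly_Mapping.keys (F x))"
  proof (rule UN_mono[OF order_refl])
    fix x assume "x \<in> supp v"
    have "x \<in> S" using fs(2) \<open>x \<in> supp v\<close> by auto
    show "supp (K x) \<subseteq> Poly_Mapping.keys (F x)" unfolding assms(2)[OF \<open>x \<in> S\<close>] by (rule supp_tw)
  qed
  finally have s: "supp (lin_ext K v) \<subseteq> (\<Union>x\<in>supp v. Poly_Mapping.keys (F x))" .
  have "finite (\<Union>x\<in>supp v. Poly_Mapping.keys (F x))" using fs(1) by simp
  moreover have "(\<Union>x\<in>supp v. Poly_Mapping.keys (F x)) \<subseteq> T" using fs(2) assms(3) by auto
  ultimately show ?thesis using s by (auto simp: vecs_def intro: finite_subset)
qed

lemma Phi0_nil: "Phi0 (a, [], b) = frag_of (a, [], b)"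
proof -
  have "{\<pi>. \<pi> permutes {0..<0::nat}} = {id}" by (auto simp: permutes_empty)
  then show ?thesis by (simp add: Phi0_def pw_def)
qed

context qsys
begin

lemma PhiK_tw: "PhiK x = tw thK thB x (Phi0 x)"
  by (cases x) (simp add: Phi_tw)

lemma PsiK_tw: "PsiK x = tw thB thK x (Psi0 N x)"
  by (cases x) (simp add: Psi_tw)

lemma supp_Kbasis: "vecs (Kbasis N p) v \<Longrightarrow> x \<in> supp v \<Longrightarrow> x \<in> Kbasis N p"
  by (auto simp: vecs_def)

lemma PhiK_nil: "PhiK (a, [], b) = vsingle (a, [], b) 1"
proof -
  have eq: "thK (a, [], b) = thB (a, [], b)" by (simp add: thK_def thB_def)
  show ?thesis
  proof (rule ext)
    fix y show "PhiK (a, [], b) y = vsingle (a, [], b) 1 y"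
      by (cases "y = (a, [], b)") (simp_all add: PhiK_tw Phi0_nil tw_def vsingle_def eq thB_nz)
  qed
qed

lemma PsiK_nil: "PsiK (a, [], b) = vsingle (a, [], b) 1"
proof -
  have eq: "thB (a, [], b) = thK (a, [], b)" by (simp add: thK_def thB_def)
  show ?thesis
  proof (rule ext)
    fix y show "PsiK (a, [], b) y = vsingle (a, [], b) 1 y"
      by (cases "y = (a, [], b)") (simp_all add: PsiK_tw Psi0_def tw_def vsingle_def eq thK_nz)
  qed
qed

lemma part1: "vecs (Kbasis N p) v \<Longrightarrow> vecs (Bbasis N p) (Phi q N v)"
  unfolding Phi_lin
proof (rule vecs_lin_ext_tw[where F=Phi0])
  fix x assume "x \<in> Kbasis N p"
  then show "Poly_Mapping.keys (Phi0 x) \<subseteq> Bbasis N p" by (cases x) (metis keys_Phi0)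
qed (simp_all add: PhiK_tw)

lemma part4: "vecs (Bbasis N p) v \<Longrightarrow> vecs (Kbasis N p) (Psi q N v)"
  unfolding Psi_lin
proof (rule vecs_lin_ext_tw[where F="Psi0 N"])
  fix x assume "x \<in> Bbasis N p"
  then show "Poly_Mapping.keys (Psi0 N x) \<subseteq> Kbasis N p" by (cases x) (metis keys_Psi0)
qed (simp_all add: PsiK_tw)

lemma part2:
  assumes "vecs (Kbasis N 0) v"
  shows "epsB q N (Phi q N v) = epsK q N v"
proof -
  have fs: "finite (supp v)" using assms by (simp add: vecs_def)
  have "epsB q N (Phi q N v) = lin_ext (\<lambda>x. epsB q N (PhiK x)) v"
    unfolding Phi_lin epsB_def by (rule lin_ext_comp[OF fs]) (simp add: PhiK_tw finite_supp_tw)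
  also have "\<dots> = epsK q N v"
    unfolding epsK_def
  proof (rule lin_ext_cong)
    fix x assume "x \<in> supp v"
    then have "x \<in> Kbasis N 0" using assms by (auto simp: vecs_def)
    then obtain a b where x: "x = (a, [], b)" by (auto simp: Kbasis_def)
    show "epsB q N (PhiK x) = (case x of (a, js, b) \<Rightarrow> amul q N (mon a) (mon b))"
      unfolding x PhiK_nil epsB_def lin_ext_vsingle by simp
  qed
  finally show ?thesis .
qed

lemma part5:
  assumes "vecs (Bbasis N 0) v"
  shows "epsK q N (Psi q N v) = epsB q N v"
proof -
  have fs: "finite (supp v)" using assms by (simp add: vecs_def)
  have "epsK q N (Psi q N v) = lin_ext (\<lambda>x. epsK q N (PsiK x)) v"
    unfolding Psi_lin epsK_def by (rule lin_ext_comp[OF fs]) (simp add: PsiK_tw finite_supp_tw)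
  also have "\<dots> = epsB q N v"
    unfolding epsB_def
  proof (rule lin_ext_cong)
    fix x assume "x \<in> supp v"
    then have "x \<in> Bbasis N 0" using assms by (auto simp: vecs_def)
    then obtain a b where x: "x = (a, [], b)" by (auto simp: Bbasis_def)
    show "epsK q N (PsiK x) = (case x of (a, js, b) \<Rightarrow> amul q N (mon a) (mon b))"
      unfolding x PsiK_nil epsK_def lin_ext_vsingle by simp
  qed
  finally show ?thesis .
qed

lemma part3:
  assumes "1 \<le> p" "vecs (Kbasis N p) v"
  shows "deltaB q N (Phi q N v) = Phi q N (dK q N v)"
proof -
  have fs: "finite (supp v)" using assms by (simp add: vecs_def)
  have dKk_tw: "dKk x = tw thK thK x (dK0 x)" if "x \<in> Kbasis N p'" for x p'
    using that by (auto simp: Kbasis_def dK_tw)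
  have "deltaB q N (Phi q N v) = lin_ext (\<lambda>x. lin_ext dBk (PhiK x)) v"
    unfolding Phi_lin dB_lin by (rule lin_ext_comp[OF fs]) (simp add: PhiK_tw finite_supp_tw)
  also have "\<dots> = lin_ext (\<lambda>x. lin_ext PhiK (dKk x)) v"
  proof (rule lin_ext_cong)
    fix x assume "x \<in> supp v"
    then have xK: "x \<in> Kbasis N p" using assms by (auto simp: vecs_def)
    then obtain a js b where x: "x = (a, js, b)" "length js = p" by (auto simp: Kbasis_def)
    obtain n where n: "length js = Suc n" using x(2) assms(1) by (cases p) auto
    have "lin_ext dBk (PhiK x) = tw thK thB x (frag_extend dB0 (Phi0 x))"
      unfolding PhiK_tw
    proof (rule tw_comp)
      fix Y assume "Y \<in> Poly_Mapping.keys (Phi0 x)"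
      then have "Y \<in> Bbasis N p" using keys_Phi0 xK x(1) by blast
      obtain c ls d where Y0: "Y = (c, ls, d)" by (cases Y) auto
      then have Y: "Y = (c, ls, d)" "length ls = p" using \<open>Y \<in> Bbasis N p\<close> by (auto simp: Bbasis_def)
      then have "ls \<noteq> []" using assms(1) by auto
      then show "dBk Y = tw thB thB Y (dB0 Y)" unfolding Y by (rule dB_tw)
    qed (rule thB_nz)
    also have "\<dots> = tw thK thB x (frag_extend Phi0 (dK0 x))" unfolding x(1) U1[OF n] ..
    also have "\<dots> = lin_ext PhiK (dKk x)"
      unfolding dKk_tw[OF xK] by (rule tw_comp[symmetric]) (simp_all add: PhiK_tw thK_nz)
    finally show "lin_ext dBk (PhiK x) = lin_ext PhiK (dKk x)" .
  qed
  also have "\<dots> = Phi q N (dK q N v)"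
    unfolding Phi_lin dK_lin
    by (rule lin_ext_comp[OF fs, symmetric]) (use assms(2) in \<open>auto simp: vecs_def dKk_tw finite_supp_tw\<close>)
  finally show ?thesis .
qed

lemma part6:
  assumes "1 \<le> p" "vecs (Bbasis N p) v"
  shows "dK q N (Psi q N v) = Psi q N (deltaB q N v)"
proof -
  have fs: "finite (supp v)" using assms by (simp add: vecs_def)
  have dKk_tw: "dKk x = tw thK thK x (dK0 x)" if "x \<in> Kbasis N p'" for x p'
    using that by (auto simp: Kbasis_def dK_tw)
  have dBk_tw: "dBk y = tw thB thB y (dB0 y)" if "y \<in> Bbasis N p" for y
  proof -
    obtain c ls d where Y0: "y = (c, ls, d)" by (cases y) auto
    then have Y: "y = (c, ls, d)" "length ls = p" using that by (auto simp: Bbasis_def)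
    then have "ls \<noteq> []" using assms(1) by auto
    then show ?thesis unfolding Y by (rule dB_tw)
  qed
  have "dK q N (Psi q N v) = lin_ext (\<lambda>x. lin_ext dKk (PsiK x)) v"
    unfolding Psi_lin dK_lin by (rule lin_ext_comp[OF fs]) (simp add: PsiK_tw finite_supp_tw)
  also have "\<dots> = lin_ext (\<lambda>x. lin_ext PsiK (dBk x)) v"
  proof (rule lin_ext_cong)
    fix y assume "y \<in> supp v"
    then have yB: "y \<in> Bbasis N p" using assms by (auto simp: vecs_def)
    then obtain a ls b where y: "y = (a, ls, b)" "length ls = p" "set ls \<subseteq> expvecs N"
      by (auto simp: Bbasis_def)
    have ne: "ls \<noteq> []" using y(2) assms(1) by auto
    have "lin_ext dKk (PsiK y) = tw thB thK y (frag_extend dK0 (Psi0 N y))"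
      unfolding PsiK_tw
    proof (rule tw_comp)
      fix Y assume "Y \<in> Poly_Mapping.keys (Psi0 N y)"
      then have "Y \<in> Kbasis N p" using keys_Psi0 yB y(1) by blast
      then show "dKk Y = tw thK thK Y (dK0 Y)" by (rule dKk_tw)
    qed (rule thK_nz)
    also have "\<dots> = tw thB thK y (frag_extend (Psi0 N) (dB0 y))" unfolding y(1) U2[OF ne y(3)] ..
    also have "\<dots> = lin_ext PsiK (dBk y)"
      unfolding dBk_tw[OF yB] by (rule tw_comp[symmetric]) (simp_all add: PsiK_tw thB_nz)
    finally show "lin_ext dKk (PsiK y) = lin_ext PsiK (dBk y)" .
  qed
  also have "\<dots> = Psi q N (deltaB q N v)"
    unfolding Psi_lin dB_lin
    by (rule lin_ext_comp[OF fs, symmetric]) (use assms(2) in \<open>auto simp: vecs_def dBk_tw finite_supp_tw\<close>)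
  finally show ?thesis .
qed

lemma part7:
  assumes "vecs (Kbasis N p) v"
  shows "Psi q N (Phi q N v) = v"
proof -
  have fs: "finite (supp v)" using assms by (simp add: vecs_def)
  have "Psi q N (Phi q N v) = lin_ext (\<lambda>x. lin_ext PsiK (PhiK x)) v"
    unfolding Phi_lin Psi_lin by (rule lin_ext_comp[OF fs]) (simp add: PhiK_tw finite_supp_tw)
  also have "\<dots> = lin_ext (\<lambda>x. vsingle x 1) v"
  proof (rule lin_ext_cong)
    fix x assume "x \<in> supp v"
    then have xK: "x \<in> Kbasis N p" using assms by (auto simp: vecs_def)
    then obtain a js b where x: "x = (a, js, b)" "sorted_wrt (<) js" "set js \<subseteq> {1..N}"
      by (auto simp: Kbasis_def)
    have "lin_ext PsiK (PhiK x) = tw thK thK x (frag_extend (Psi0 N) (Phi0 x))"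
      unfolding PhiK_tw by (rule tw_comp) (simp_all add: PsiK_tw thB_nz)
    also have "\<dots> = tw thK thK x (frag_of x)" unfolding x(1) U3[OF x(2,3)] ..
    also have "\<dots> = vsingle x 1" by (rule tw_of[where t=thK, OF thK_nz])
    finally show "lin_ext PsiK (PhiK x) = vsingle x 1" .
  qed
  also have "\<dots> = v" by (rule lin_ext_single_id[OF fs])
  finally show ?thesis .
qed

end

theorem mainTheorem4:
  fixes q :: "nat \<Rightarrow> nat \<Rightarrow> 'k::field" and N :: nat
  assumes "\<forall>i\<in>{1..N}. \<forall>j\<in>{1..N}. q i j \<noteq> 0"
    and "\<forall>i\<in>{1..N}. q i i = 1"
    and "\<forall>i\<in>{1..N}. \<forall>j\<in>{1..N}. q j i = inverse (q i j)"
  shows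
    "((\<forall>p v. vecs (Kbasis N p) v \<longrightarrow> vecs (Bbasis N p) (Phi q N v))
      \<and> (\<forall>v. vecs (Kbasis N 0) v \<longrightarrow> epsB q N (Phi q N v) = epsK q N v)
      \<and> (\<forall>p\<ge>1. \<forall>v. vecs (Kbasis N p) v \<longrightarrow> deltaB q N (Phi q N v) = Phi q N (dK q N v)))
   \<and> ((\<forall>p v. vecs (Bbasis N p) v \<longrightarrow> vecs (Kbasis N p) (Psi q N v))
      \<and> (\<forall>v. vecs (Bbasis N 0) v \<longrightarrow> epsK q N (Psi q N v) = epsB q N v)
      \<and> (\<forall>p\<ge>1. \<forall>v. vecs (Bbasis N p) v \<longrightarrow> dK q N (Psi q N v) = Psi q N (deltaB q N v)))
   \<and> (\<forall>p v. vecs (Kbasis N p) v \<longrightarrow> Psi q N (Phi q N v) = v)"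
proof -
  interpret qsys q N using assms by unfold_locales
  show ?thesis using part1 part2 part3 part4 part5 part6 part7 by blast
qed


end
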